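(* Drift-less setting with target $\rho_d=|\Psi\rangle\langle\Psi|$ and neighborhoods $\mathcal N_1,\dots,\mathcal N_M$. Assume that for every $k$ the strict inclusion $\mathcal H^w_{\mathcal N_k}\subsetneq\mathcal H^\circ_{\mathcal N_k}$ holds. Let $\mathcal H'=\mathcal H\ominus\bigcap_k\big(\mathcal H^w_{\mathcal N_k}\otimes\mathcal H_{\bar{\mathcal N}_k}\big)$, and let $D_k=D_{\mathcal N_k}\otimes I_{\bar{\mathcal N}_k}$, where each $D_{\mathcal N_k}$ annihilates $\mathcal H^w_{\mathcal N_k}\oplus\mathcal H^t_{\mathcal N_k}$ and maps $\mathcal H^r_{\mathcal N_k}$ into $\mathcal H^t_{\mathcal N_k}\oplus\mathcal H^r_{\mathcal N_k}$, chosen so that $\mathfrak D(\mathcal H_0)$ is globally asymptotically stable for $\mathcal L(0,\{D_k\})$. Then $\rho_d$ is $\mathcal H'$-DQLS via these $D_k$, i.e. $e^{\mathcal L(0,\{D_k\})t}(\rho_0)\to\rho_d$ for all $\rho_0\in\mathfrak D(\mathcal H')$.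
   Context: $\mathcal H=\bigotimes_{a=1}^n\mathcal H_a$ finite-dimensional; $\mathcal H_{\mathcal N_k}=\bigotimes_{a\in\mathcal N_k}\mathcal H_a$, $\mathcal H_{\bar{\mathcal N}_k}=\bigotimes_{a\notin\mathcal N_k}\mathcal H_a$. $\mathfrak D(\mathcal K)$: density operators supported in $\mathcal K$. $\mathcal L(0,\{D_k\})(\rho)=\sum_k(D_k\rho D_k^\dagger-\frac12\{D_k^\dagger D_k,\rho\})$; $\mathfrak D(\mathcal H_0)$ GAS means every trajectory converges to the set $\mathfrak D(\mathcal H_0)$. $\mathcal H_d=\mathrm{span}\{|\Psi\rangle\}$; $\rho_{\mathcal N_k}=\mathrm{Tr}_{\bar{\mathcal N}_k}\rho_d$; $\mathcal H_0=\bigcap_k\mathrm{supp}(\rho_{\mathcal N_k}\otimes I_{\bar{\mathcal N}_k})$; $\mathcal H_w=\mathcal H_0\ominus\mathcal H_d$ with projector $\Pi_{\mathcal H_w}$. $\mathcal H^\circ_{\mathcal N_k}=\mathrm{supp}(\rho_{\mathcal N_k})$, $\mathcal H^r_{\mathcal N_k}=\mathcal H_{\mathcal N_k}\ominus\mathcal H^\circ_{\mathcal N_k}$, $\mathcal H^w_{\mathcal N_k}=\mathrm{supp}(\mathrm{Tr}_{\bar{\mathcal N}_k}\Pi_{\mathcal H_w})$, $\mathcal H^t_{\mathcal N_k}=\mathcal H^\circ_{\mathcal N_k}\ominus\mathcal H^w_{\mathcal N_k}$. *)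

theory Defs
  imports Complex_Main
begin

text \<open>
Finite-dimensional multipartite Hilbert space H = tensor product of H_a, a < n, with
dim H_a = d a.  The computational (product) basis of H is indexed by configurations
c :: nat => nat with c a < d a for a < n and c a = 0 for a >= n.  Everything lives inside the coordinate space of H; a subsystem
N (a subset of sites) is represented by the configurations vanishing outside N.
\<close>

type_synonym cfg = "nat \<Rightarrow> nat"
type_synonym vect = "cfg \<Rightarrow> complex"
type_synonym cmat = "cfg \<Rightarrow> cfg \<Rightarrow> complex"

definition configs :: "nat \<Rightarrow> (nat \<Rightarrow> nat) \<Rightarrow> cfg set" where
  "configs n d = {c. \<forall>a. (a < n \<longrightarrow> c a < d a) \<and> (n \<le> a \<longrightarrow> c a = 0)}"

definition restr :: "nat set \<Rightarrow> cfg \<Rightarrow> cfg" where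
  "restr N c = (\<lambda>a. if a \<in> N then c a else 0)"

definition sub_configs :: "nat \<Rightarrow> (nat \<Rightarrow> nat) \<Rightarrow> nat set \<Rightarrow> cfg set" where
  "sub_configs n d N = restr N ` configs n d"

definition vecs :: "cfg set \<Rightarrow> vect set" where
  "vecs S = {v. \<forall>c. c \<notin> S \<longrightarrow> v c = 0}"

definition inner_on :: "cfg set \<Rightarrow> vect \<Rightarrow> vect \<Rightarrow> complex" where
  "inner_on S w v = (\<Sum>c\<in>S. cnj (w c) * v c)"

definition mapply :: "cfg set \<Rightarrow> cmat \<Rightarrow> vect \<Rightarrow> vect" where
  "mapply S A x = (\<lambda>i. \<Sum>j\<in>S. A i j * x j)"

definition mmul :: "cfg set \<Rightarrow> cmat \<Rightarrow> cmat \<Rightarrow> cmat" where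
  "mmul S A B = (\<lambda>i j. \<Sum>c\<in>S. A i c * B c j)"

definition adj :: "cmat \<Rightarrow> cmat" where
  "adj A = (\<lambda>i j. cnj (A j i))"

definition supported_on :: "cfg set \<Rightarrow> cmat \<Rightarrow> bool" where
  "supported_on S A \<longleftrightarrow> (\<forall>i j. i \<notin> S \<or> j \<notin> S \<longrightarrow> A i j = 0)"

text \<open>support (= range) of an operator on the space spanned by S\<close>
definition supp :: "cfg set \<Rightarrow> cmat \<Rightarrow> vect set" where
  "supp S A = mapply S A ` vecs S"

definition cspan :: "vect set \<Rightarrow> vect set" where
  "cspan X = {v. \<exists>F a. finite F \<and> F \<subseteq> X \<and> v = (\<lambda>i. \<Sum>x\<in>F. a x * x i)}"

text \<open>orthogonal complement of K2 inside K1 (K1 \<ominus> K2), inner product over the full basis S\<close>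
definition ominus :: "cfg set \<Rightarrow> vect set \<Rightarrow> vect set \<Rightarrow> vect set" where
  "ominus S K1 K2 = {v \<in> K1. \<forall>w\<in>K2. inner_on S w v = 0}"

definition osum :: "vect set \<Rightarrow> vect set \<Rightarrow> vect set" where
  "osum K1 K2 = {(\<lambda>i. u i + w i) | u w. u \<in> K1 \<and> w \<in> K2}"

definition proj :: "cfg set \<Rightarrow> vect set \<Rightarrow> cmat" where
  "proj S K = (SOME P. supported_on S P \<and>
      (\<forall>v\<in>vecs S. mapply S P v \<in> K \<and> (\<forall>w\<in>K. inner_on S w (\<lambda>i. v i - mapply S P v i) = 0)))"

text \<open>partial trace over the complement of N: Tr_{bar N} \<rho>, an operator on H_N\<close>
definition ptrace :: "nat \<Rightarrow> (nat \<Rightarrow> nat) \<Rightarrow> nat set \<Rightarrow> cmat \<Rightarrow> cmat" where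
  "ptrace n d N \<rho> = (\<lambda>x x'.
     if x \<in> sub_configs n d N \<and> x' \<in> sub_configs n d N then
       (\<Sum>y\<in>sub_configs n d (- N). \<rho> (\<lambda>a. if a \<in> N then x a else y a)
                                        (\<lambda>a. if a \<in> N then x' a else y a))
     else 0)"

text \<open>A_N \<otimes> I_{bar N} as an operator on H\<close>
definition kron_id :: "nat \<Rightarrow> (nat \<Rightarrow> nat) \<Rightarrow> nat set \<Rightarrow> cmat \<Rightarrow> cmat" where
  "kron_id n d N A = (\<lambda>c c'.
     if c \<in> configs n d \<and> c' \<in> configs n d \<and> restr (- N) c = restr (- N) c'
     then A (restr N c) (restr N c') else 0)"

text \<open>K_N \<otimes> H_{bar N} for a subspace K_N of H_N\<close>
definition tensor_full :: "nat \<Rightarrow> (nat \<Rightarrow> nat) \<Rightarrow> nat set \<Rightarrow> vect set \<Rightarrow> vect set" where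
  "tensor_full n d N K = cspan {(\<lambda>c. if c \<in> configs n d then v (restr N c) * w (restr (- N) c) else 0)
                              | v w. v \<in> K \<and> w \<in> vecs (sub_configs n d (- N))}"

definition psd_on :: "cfg set \<Rightarrow> cmat \<Rightarrow> bool" where
  "psd_on S A \<longleftrightarrow> (\<forall>v\<in>vecs S. Im (inner_on S v (mapply S A v)) = 0 \<and> Re (inner_on S v (mapply S A v)) \<ge> 0)"

definition dens :: "nat \<Rightarrow> (nat \<Rightarrow> nat) \<Rightarrow> vect set \<Rightarrow> cmat set" where
  "dens n d K = {\<rho>. supported_on (configs n d) \<rho> \<and> psd_on (configs n d) \<rho>
                    \<and> (\<Sum>c\<in>configs n d. \<rho> c c) = 1 \<and> supp (configs n d) \<rho> \<subseteq> K}"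

text \<open>Lindblad generator L(0,{D_k}), k < M (no Hamiltonian)\<close>
definition lindblad0 :: "cfg set \<Rightarrow> nat \<Rightarrow> (nat \<Rightarrow> cmat) \<Rightarrow> cmat \<Rightarrow> cmat" where
  "lindblad0 S M D \<rho> = (\<lambda>i j. \<Sum>k<M.
      mmul S (mmul S (D k) \<rho>) (adj (D k)) i j
      - (1/2) * (mmul S (mmul S (adj (D k)) (D k)) \<rho> i j + mmul S \<rho> (mmul S (adj (D k)) (D k)) i j))"

definition evol :: "(cmat \<Rightarrow> cmat) \<Rightarrow> real \<Rightarrow> cmat \<Rightarrow> cmat" where
  "evol L t \<rho> = (\<lambda>i j. \<Sum>m. complex_of_real (t ^ m / fact m) * (L ^^ m) \<rho> i j)"

definition mnorm :: "cfg set \<Rightarrow> cmat \<Rightarrow> real" where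
  "mnorm S A = sqrt (\<Sum>i\<in>S. \<Sum>j\<in>S. (cmod (A i j))\<^sup>2)"

definition GAS :: "nat \<Rightarrow> (nat \<Rightarrow> nat) \<Rightarrow> (cmat \<Rightarrow> cmat) \<Rightarrow> cmat set \<Rightarrow> bool" where
  "GAS n d L Q \<longleftrightarrow> (\<forall>\<rho>0 \<in> dens n d (vecs (configs n d)).
     ((\<lambda>t. INF \<sigma>\<in>Q. mnorm (configs n d) (\<lambda>i j. evol L t \<rho>0 i j - \<sigma> i j)) \<longlongrightarrow> 0) at_top)"


definition rho_d :: "vect \<Rightarrow> cmat" where
  "rho_d \<Psi> = (\<lambda>i j. \<Psi> i * cnj (\<Psi> j))"

definition H_d :: "vect \<Rightarrow> vect set" where
  "H_d \<Psi> = {(\<lambda>i. a * \<Psi> i) | a. True}"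

definition rho_N :: "nat \<Rightarrow> (nat \<Rightarrow> nat) \<Rightarrow> vect \<Rightarrow> nat set \<Rightarrow> cmat" where
  "rho_N n d \<Psi> Nk = ptrace n d Nk (rho_d \<Psi>)"

definition H_0 :: "nat \<Rightarrow> (nat \<Rightarrow> nat) \<Rightarrow> vect \<Rightarrow> nat \<Rightarrow> (nat \<Rightarrow> nat set) \<Rightarrow> vect set" where
  "H_0 n d \<Psi> M N = {v \<in> vecs (configs n d).
      \<forall>k<M. v \<in> supp (configs n d) (kron_id n d (N k) (rho_N n d \<Psi> (N k)))}"

definition H_w :: "nat \<Rightarrow> (nat \<Rightarrow> nat) \<Rightarrow> vect \<Rightarrow> nat \<Rightarrow> (nat \<Rightarrow> nat set) \<Rightarrow> vect set" where
  "H_w n d \<Psi> M N = ominus (configs n d) (H_0 n d \<Psi> M N) (H_d \<Psi>)"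

definition H_circ :: "nat \<Rightarrow> (nat \<Rightarrow> nat) \<Rightarrow> vect \<Rightarrow> nat set \<Rightarrow> vect set" where
  "H_circ n d \<Psi> Nk = supp (sub_configs n d Nk) (rho_N n d \<Psi> Nk)"

definition H_r :: "nat \<Rightarrow> (nat \<Rightarrow> nat) \<Rightarrow> vect \<Rightarrow> nat set \<Rightarrow> vect set" where
  "H_r n d \<Psi> Nk = ominus (configs n d) (vecs (sub_configs n d Nk)) (H_circ n d \<Psi> Nk)"

definition H_wloc :: "nat \<Rightarrow> (nat \<Rightarrow> nat) \<Rightarrow> vect \<Rightarrow> nat \<Rightarrow> (nat \<Rightarrow> nat set) \<Rightarrow> nat set \<Rightarrow> vect set" where
  "H_wloc n d \<Psi> M N Nk = supp (sub_configs n d Nk)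
      (ptrace n d Nk (proj (configs n d) (H_w n d \<Psi> M N)))"

definition H_t :: "nat \<Rightarrow> (nat \<Rightarrow> nat) \<Rightarrow> vect \<Rightarrow> nat \<Rightarrow> (nat \<Rightarrow> nat set) \<Rightarrow> nat set \<Rightarrow> vect set" where
  "H_t n d \<Psi> M N Nk = ominus (configs n d) (H_circ n d \<Psi> Nk) (H_wloc n d \<Psi> M N Nk)"

end

theory Submission
  imports Defs "HOL-Library.FuncSet"
begin


section \<open>Inner product basics\<close>

lemma inner_add_right: "inner_on T w (\<lambda>i. u i + v i) = inner_on T w u + inner_on T w v"
  by (simp add: inner_on_def distrib_left sum.distrib)
lemma inner_add_left: "inner_on T (\<lambda>i. u i + v i) w = inner_on T u w + inner_on T v w"
  by (simp add: inner_on_def distrib_right sum.distrib)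
lemma inner_diff_right: "inner_on T w (\<lambda>i. u i - v i) = inner_on T w u - inner_on T w v"
  by (simp add: inner_on_def right_diff_distrib sum_subtractf)
lemma inner_diff_left: "inner_on T (\<lambda>i. u i - v i) w = inner_on T u w - inner_on T v w"
  by (simp add: inner_on_def left_diff_distrib sum_subtractf)
lemma inner_scale_right: "inner_on T w (\<lambda>i. a * u i) = a * inner_on T w u"
  by (simp add: inner_on_def sum_distrib_left algebra_simps)
lemma inner_scale_left: "inner_on T (\<lambda>i. a * u i) w = cnj a * inner_on T u w"
  by (simp add: inner_on_def sum_distrib_left algebra_simps)
lemma inner_sum_right: "inner_on T w (\<lambda>i. \<Sum>e\<in>F. f e i) = (\<Sum>e\<in>F. inner_on T w (f e))"
  by (simp add: inner_on_def sum_distrib_left sum.swap[of _ T])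
lemma inner_sum_left: "inner_on T (\<lambda>i. \<Sum>e\<in>F. f e i) w = (\<Sum>e\<in>F. inner_on T (f e) w)"
  by (simp add: inner_on_def sum_distrib_right sum.swap[of _ T])
lemma inner_zero_right[simp]: "inner_on T w (\<lambda>_. 0) = 0"
  by (simp add: inner_on_def)
lemma inner_zero_left[simp]: "inner_on T (\<lambda>_. 0) w = 0"
  by (simp add: inner_on_def)
lemma inner_cnj: "inner_on T v w = cnj (inner_on T w v)"
  by (simp add: inner_on_def mult.commute)

lemma cnj_mult_self: "cnj z * z = complex_of_real ((cmod z)\<^sup>2)"
  by (metis complex_norm_square mult.commute)

lemma inner_self: "inner_on T v v = complex_of_real (\<Sum>c\<in>T. (cmod (v c))\<^sup>2)"
  unfolding inner_on_def by (simp add: cnj_mult_self)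

lemma inner_self_Re_ge: "Re (inner_on T v v) \<ge> 0"
  by (simp add: inner_self sum_nonneg)

lemma inner_self_eq0:
  assumes "finite T" "v \<in> vecs T" "inner_on T v v = 0" shows "v = (\<lambda>_. 0)"
proof
  fix c
  have "complex_of_real (\<Sum>c\<in>T. (cmod (v c))\<^sup>2) = 0" using assms(3) by (simp only: inner_self)
  hence "(\<Sum>c\<in>T. (cmod (v c))\<^sup>2) = 0" by (simp only: of_real_eq_0_iff)
  hence "\<forall>c\<in>T. (cmod (v c))\<^sup>2 = 0" using assms(1) by (simp add: sum_nonneg_eq_0_iff)
  thus "v c = 0" using assms(2) by (cases "c \<in> T") (auto simp: vecs_def)
qed

definition subsp :: "vect set \<Rightarrow> bool" where
  "subsp K \<longleftrightarrow> (\<lambda>_. 0) \<in> K \<and> (\<forall>u\<in>K. \<forall>v\<in>K. (\<lambda>i. u i + v i) \<in> K) \<and> (\<forall>a. \<forall>u\<in>K. (\<lambda>i. a * u i) \<in> K)"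

lemma subsp_sum:
  assumes "subsp K" "\<And>e. e \<in> F \<Longrightarrow> f e \<in> K" shows "(\<lambda>i. \<Sum>e\<in>F. f e i) \<in> K"
proof (cases "finite F")
  case True thus ?thesis using assms(2)
  proof (induction F rule: finite_induct)
    case empty thus ?case using assms(1) by (simp add: subsp_def)
  next
    case (insert x F) thus ?case using assms(1) unfolding subsp_def by simp
  qed
next
  case False thus ?thesis using assms(1) by (simp add: subsp_def)
qed

lemma subsp_lin:
  assumes "subsp K" "\<And>e. e \<in> F \<Longrightarrow> e \<in> K" shows "(\<lambda>i. \<Sum>e\<in>F. a e * e i) \<in> K"
  using subsp_sum[OF assms(1), of F "\<lambda>e i. a e * e i"] assms unfolding subsp_def by auto

lemma subsp_diff:
  assumes "subsp K" "u \<in> K" "v \<in> K" shows "(\<lambda>i. u i - v i) \<in> K"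
proof -
  have "(\<lambda>i. (-1) * v i) \<in> K" using assms unfolding subsp_def by blast
  moreover have "\<forall>u\<in>K. \<forall>v\<in>K. (\<lambda>i. u i + v i) \<in> K" using assms unfolding subsp_def by blast
  ultimately have "(\<lambda>i. u i + (-1) * v i) \<in> K" using assms(2) by fastforce
  moreover have "(\<lambda>i. u i + (-1) * v i) = (\<lambda>i. u i - v i)" by simp
  ultimately show ?thesis by simp
qed

definition orthon :: "cfg set \<Rightarrow> vect set \<Rightarrow> bool" where
  "orthon T F \<longleftrightarrow> (\<forall>e\<in>F. \<forall>e'\<in>F. inner_on T e e' = (if e = e' then 1 else 0))"

lemma orthon_expand_inner:
  assumes "orthon T F" "finite F" "e' \<in> F"
  shows "inner_on T e' (\<lambda>i. \<Sum>e\<in>F. a e * e i) = a e'"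
proof -
  have "inner_on T e' (\<lambda>i. \<Sum>e\<in>F. a e * e i) = (\<Sum>e\<in>F. a e * inner_on T e' e)"
    by (simp add: inner_sum_right inner_scale_right)
  also have "\<dots> = (\<Sum>e\<in>F. if e = e' then a e else 0)"
    using assms(1,3) by (intro sum.cong) (auto simp: orthon_def)
  also have "\<dots> = a e'" using assms(2,3) by (simp add: sum.delta')
  finally show ?thesis .
qed

lemma residual_orth:
  assumes "orthon T F" "finite F" "e' \<in> F"
  shows "inner_on T e' (\<lambda>i. v i - (\<Sum>e\<in>F. inner_on T e v * e i)) = 0"
  using orthon_expand_inner[OF assms, of "\<lambda>e. inner_on T e v"] by (simp add: inner_diff_right)

lemma bessel:
  assumes "orthon T F" "finite F"
  shows "(\<Sum>e\<in>F. (cmod (inner_on T e v))\<^sup>2) \<le> Re (inner_on T v v)"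
proof -
  define r where "r = (\<lambda>i. v i - (\<Sum>e\<in>F. inner_on T e v * e i))"
  have ro: "inner_on T r e = 0" if "e \<in> F" for e
    using residual_orth[OF assms that, of v] inner_cnj[of T r e] by (simp add: r_def)
  have "inner_on T r r = inner_on T r v - (\<Sum>e\<in>F. inner_on T e v * inner_on T r e)"
    by (simp add: r_def[of] inner_diff_right inner_sum_right inner_scale_right)
  also have "\<dots> = inner_on T r v" using ro by simp
  also have "\<dots> = inner_on T v v - (\<Sum>e\<in>F. cnj (inner_on T e v) * inner_on T e v)"
    by (simp add: r_def inner_diff_left inner_sum_left inner_scale_left)
  also have "\<dots> = inner_on T v v - complex_of_real (\<Sum>e\<in>F. (cmod (inner_on T e v))\<^sup>2)"
    by (simp add: cnj_mult_self)
  finally have "Re (inner_on T r r) = Re (inner_on T v v) - (\<Sum>e\<in>F. (cmod (inner_on T e v))\<^sup>2)"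
    by simp
  thus ?thesis using inner_self_Re_ge[of T r] by linarith
qed

definition delta :: "cfg \<Rightarrow> vect" where
  "delta c = (\<lambda>i. if i = c then 1 else 0)"

lemma inner_delta_right: "finite T \<Longrightarrow> c \<in> T \<Longrightarrow> inner_on T e (delta c) = cnj (e c)"
proof -
  assume a: "finite T" "c \<in> T"
  have "inner_on T e (delta c) = (\<Sum>ca\<in>T. if ca = c then cnj (e c) else 0)"
    unfolding inner_on_def delta_def by (rule sum.cong) auto
  thus ?thesis using a by simp
qed
lemma inner_delta_left: "finite T \<Longrightarrow> c \<in> T \<Longrightarrow> inner_on T (delta c) e = e c"
proof -
  assume a: "finite T" "c \<in> T"
  have "inner_on T (delta c) e = (\<Sum>ca\<in>T. if ca = c then e c else 0)"
    unfolding inner_on_def delta_def by (rule sum.cong) auto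
  thus ?thesis using a by simp
qed

lemma orthon_card:
  assumes "finite T" "orthon T F" "finite F" "F \<subseteq> vecs T"
  shows "card F \<le> card T"
proof -
  have b: "(\<Sum>e\<in>F. (cmod (e c))\<^sup>2) \<le> 1" if "c \<in> T" for c
  proof -
    have "(\<Sum>e\<in>F. (cmod (inner_on T e (delta c)))\<^sup>2) \<le> Re (inner_on T (delta c) (delta c))"
      by (rule bessel[OF assms(2,3)])
    moreover have "inner_on T (delta c) (delta c) = 1"
      using inner_delta_left[OF assms(1) that, of "delta c"] by (simp add: delta_def)
    ultimately show ?thesis using assms(1) that by (simp add: inner_delta_right)
  qed
  have "real (card F) = (\<Sum>e\<in>F. Re (inner_on T e e))"
    using assms(2) by (simp add: orthon_def)
  also have "\<dots> = (\<Sum>e\<in>F. \<Sum>c\<in>T. (cmod (e c))\<^sup>2)" by (simp add: inner_self)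
  also have "\<dots> = (\<Sum>c\<in>T. \<Sum>e\<in>F. (cmod (e c))\<^sup>2)" by (rule sum.swap)
  also have "\<dots> \<le> (\<Sum>c\<in>T. 1)" using b by (intro sum_mono) auto
  finally show ?thesis by simp
qed




lemma onb_exists:
  assumes T: "finite T" and K: "subsp K" "K \<subseteq> vecs T"
  shows "\<exists>F. finite F \<and> F \<subseteq> K \<and> orthon T F \<and> (\<forall>v\<in>K. v = (\<lambda>i. \<Sum>e\<in>F. inner_on T e v * e i))"
proof -
  define good where "good F \<longleftrightarrow> finite F \<and> F \<subseteq> K \<and> orthon T F" for F
  define P where "P k \<longleftrightarrow> (\<exists>F. good F \<and> card F = k)" for k
  have "P 0" unfolding P_def good_def orthon_def by (rule exI[of _ "{}"]) auto
  moreover have "\<forall>y. P y \<longrightarrow> y \<le> card T"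
    unfolding P_def good_def using orthon_card[OF T] K(2) by blast
  ultimately obtain k where "P k" and kmax: "\<forall>y. P y \<longrightarrow> y \<le> k"
    using Nat.ex_has_greatest_nat[of P 0 "card T"] by blast
  then obtain F where gF: "good F" and cF: "card F = k" unfolding P_def by blast
  have fin: "finite F" and FK: "F \<subseteq> K" and oF: "orthon T F" using gF good_def by auto
  have "v = (\<lambda>i. \<Sum>e\<in>F. inner_on T e v * e i)" if vK: "v \<in> K" for v
  proof (rule ccontr)
    assume ne: "v \<noteq> (\<lambda>i. \<Sum>e\<in>F. inner_on T e v * e i)"
    define r where "r = (\<lambda>i. v i - (\<Sum>e\<in>F. inner_on T e v * e i))"
    have rK: "r \<in> K" unfolding r_def
      by (rule subsp_diff[OF K(1) vK subsp_lin[OF K(1)]]) (use FK in auto)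
    have rne: "r \<noteq> (\<lambda>_. 0)"
    proof
      assume "r = (\<lambda>_. 0)"
      thus False using ne unfolding r_def fun_eq_iff by simp
    qed
    have "inner_on T r r \<noteq> 0" using inner_self_eq0[OF T] rK K(2) rne by blast
    define s where "s = (\<Sum>c\<in>T. (cmod (r c))\<^sup>2)"
    have rr: "inner_on T r r = complex_of_real s" by (simp add: inner_self s_def)
    have s0: "s > 0" using \<open>inner_on T r r \<noteq> 0\<close> rr s_def sum_nonneg[of T "\<lambda>c. (cmod (r c))\<^sup>2"]
      by (metis less_eq_real_def of_real_0 zero_le_power2)
    define e0 where "e0 = (\<lambda>i. complex_of_real (1 / sqrt s) * r i)"
    have e0K: "e0 \<in> K" using K(1) rK unfolding e0_def subsp_def by blast
    have e0e0: "inner_on T e0 e0 = 1"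
    proof -
      have "inner_on T e0 e0 = complex_of_real (1 / sqrt s) * complex_of_real (1 / sqrt s) * complex_of_real s"
        unfolding e0_def by (simp only: inner_scale_left inner_scale_right rr complex_cnj_complex_of_real mult.assoc)
      also have "\<dots> = complex_of_real ((1 / sqrt s) * (1 / sqrt s) * s)" by (simp only: of_real_mult)
      also have "(1 / sqrt s) * (1 / sqrt s) * s = 1" using s0
        by (simp add: field_simps)
      finally show ?thesis by simp
    qed
    have orth: "inner_on T e e0 = 0" if "e \<in> F" for e
      unfolding e0_def inner_scale_right using residual_orth[OF oF fin that, of v]
      by (simp add: r_def)
    have orth2: "inner_on T e0 e = 0" if "e \<in> F" for e
      using orth[OF that] inner_cnj[of T e0 e] by simp
    have e0F: "e0 \<notin> F"
    proof
      assume "e0 \<in> F"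
      hence "inner_on T e0 e0 = 0" by (rule orth)
      thus False using e0e0 by simp
    qed
    have "orthon T (insert e0 F)" unfolding orthon_def
    proof (intro ballI)
      fix e e' assume "e \<in> insert e0 F" "e' \<in> insert e0 F"
      thus "inner_on T e e' = (if e = e' then 1 else 0)"
      proof (elim insertE)
        assume "e = e0" "e' = e0" thus ?thesis using e0e0 by simp
      next
        assume "e = e0" "e' \<in> F" thus ?thesis using orth2 e0F by auto
      next
        assume "e \<in> F" "e' = e0" thus ?thesis using orth e0F by auto
      next
        assume "e \<in> F" "e' \<in> F" thus ?thesis using oF unfolding orthon_def by blast
      qed
    qed
    hence "good (insert e0 F)" unfolding good_def using fin FK e0K by simp
    moreover have "card (insert e0 F) = Suc k" using cF fin e0F by simp
    ultimately have "P (Suc k)" unfolding P_def by blast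
    thus False using kmax Suc_n_not_le_n by blast
  qed
  thus ?thesis using fin FK oF by blast
qed

lemma proj_decomp:
  assumes T: "finite T" and K: "subsp K" "K \<subseteq> vecs T"
  shows "\<exists>F. finite F \<and> F \<subseteq> K \<and>
     (\<forall>v. (\<lambda>i. \<Sum>e\<in>F. inner_on T e v * e i) \<in> K \<and>
          (\<forall>w\<in>K. inner_on T w (\<lambda>i. v i - (\<Sum>e\<in>F. inner_on T e v * e i)) = 0))"
proof -
  obtain F where F: "finite F" "F \<subseteq> K" "orthon T F" "\<forall>v\<in>K. v = (\<lambda>i. \<Sum>e\<in>F. inner_on T e v * e i)"
    using onb_exists[OF assms] by blast
  have I: "inner_on T w (\<lambda>i. v i - (\<Sum>e\<in>F. inner_on T e v * e i)) = 0" if "w \<in> K" for v w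
  proof -
    have "inner_on T w (\<lambda>i. v i - (\<Sum>e\<in>F. inner_on T e v * e i))
        = inner_on T (\<lambda>i. \<Sum>e\<in>F. inner_on T e w * e i) (\<lambda>i. v i - (\<Sum>e\<in>F. inner_on T e v * e i))"
      by (rule arg_cong[where f="\<lambda>u. inner_on T u _"]) (use F(4) that in blast)
    also have "\<dots> = (\<Sum>e\<in>F. cnj (inner_on T e w) * inner_on T e (\<lambda>i. v i - (\<Sum>e\<in>F. inner_on T e v * e i)))"
      by (simp add: inner_sum_left inner_scale_left)
    also have "\<dots> = 0" by (rule sum.neutral) (simp add: residual_orth[OF F(3,1)])
    finally show ?thesis .
  qed
  have II: "(\<lambda>i. \<Sum>e\<in>F. inner_on T e v * e i) \<in> K" for v
    by (rule subsp_lin[OF K(1)]) (use F(2) in blast)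
  show ?thesis
    by (rule exI[of _ F]) (simp add: F(1,2) I II)
qed

lemma decomp:
  assumes T: "finite T" and K: "subsp K" "K \<subseteq> vecs T"
  shows "\<exists>p\<in>K. \<forall>w\<in>K. inner_on T w (\<lambda>i. v i - p i) = 0"
proof -
  obtain F where F: "\<forall>v. (\<lambda>i. \<Sum>e\<in>F. inner_on T e v * e i) \<in> K \<and>
          (\<forall>w\<in>K. inner_on T w (\<lambda>i. v i - (\<Sum>e\<in>F. inner_on T e v * e i)) = 0)"
    using proj_decomp[OF assms] by blast
  show ?thesis
    by (rule bexI[of _ "\<lambda>i. \<Sum>e\<in>F. inner_on T e v * e i"]) (use F in simp_all)
qed

lemma in_subsp_by_orth:
  assumes T: "finite T" and K: "subsp K" "K \<subseteq> vecs T" and v: "v \<in> vecs T"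
    and H: "\<And>q. q \<in> vecs T \<Longrightarrow> (\<forall>w\<in>K. inner_on T w q = 0) \<Longrightarrow> inner_on T v q = 0"
  shows "v \<in> K"
proof -
  obtain p where pK: "p \<in> K" and po: "\<forall>w\<in>K. inner_on T w (\<lambda>i. v i - p i) = 0"
    using decomp[OF assms(1-3)] by blast
  define q where "q = (\<lambda>i. v i - p i)"
  have qv: "q \<in> vecs T" using v pK K(2) unfolding q_def vecs_def by auto
  have "inner_on T v q = 0" using H[OF qv] po q_def by simp
  moreover have "inner_on T p q = 0" using po pK q_def by simp
  ultimately have "inner_on T q q = 0" unfolding q_def by (simp add: inner_diff_left)
  hence "q = (\<lambda>_. 0)" using inner_self_eq0[OF T qv] by simp
  hence "v = p" unfolding q_def fun_eq_iff by simp
  thus ?thesis using pK by simp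
qed




definition merge :: "nat set \<Rightarrow> cfg \<Rightarrow> cfg \<Rightarrow> cfg" where
  "merge N x y = (\<lambda>a. if a \<in> N then x a else y a)"

lemma finite_configs: "finite (configs n d)"
proof -
  let ?g = "\<lambda>f a. if a < n then f a else (0::nat)"
  have "configs n d \<subseteq> ?g ` (PiE {..<n} (\<lambda>a. {..<d a}))"
  proof
    fix c assume c: "c \<in> configs n d"
    have m: "restrict c {..<n} \<in> PiE {..<n} (\<lambda>a. {..<d a})"
      unfolding PiE_iff using c by (simp add: configs_def)
    have "c = ?g (restrict c {..<n})"
    proof
      fix a show "c a = ?g (restrict c {..<n}) a" using c by (simp add: configs_def)
    qed
    thus "c \<in> ?g ` (PiE {..<n} (\<lambda>a. {..<d a}))" using m by blast
  qed
  moreover have "finite (PiE {..<n} (\<lambda>a. {..<d a}))" by (rule finite_PiE) simp_all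
  ultimately show ?thesis using finite_subset by blast
qed

lemma finite_sub: "finite (sub_configs n d N)"
  unfolding sub_configs_def using finite_configs by simp

lemma restr_restr: "restr N (restr N c) = restr N c"
  by (rule ext) (simp add: restr_def)

lemma sub_in_configs: "x \<in> sub_configs n d N \<Longrightarrow> x \<in> configs n d"
  unfolding sub_configs_def configs_def restr_def by force

lemma sub_restr: "x \<in> sub_configs n d N \<Longrightarrow> restr N x = x"
  unfolding sub_configs_def by (auto simp: restr_def)

lemma sub_zero: "x \<in> sub_configs n d N \<Longrightarrow> a \<notin> N \<Longrightarrow> x a = 0"
  unfolding sub_configs_def by (auto simp: restr_def)

lemma restr_in_sub: "c \<in> configs n d \<Longrightarrow> restr N c \<in> sub_configs n d N"
  unfolding sub_configs_def by blast

lemma merge_in: "x \<in> sub_configs n d N \<Longrightarrow> y \<in> sub_configs n d (- N) \<Longrightarrow> merge N x y \<in> configs n d"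
  unfolding sub_configs_def configs_def merge_def restr_def by auto

lemma restr_merge1: "x \<in> sub_configs n d N \<Longrightarrow> restr N (merge N x y) = x"
  using sub_zero[of x n d N] unfolding merge_def restr_def by auto

lemma restr_merge2: "y \<in> sub_configs n d (- N) \<Longrightarrow> restr (- N) (merge N x y) = y"
  using sub_zero[of y n d "- N"] unfolding merge_def restr_def by auto

lemma merge_restr: "merge N (restr N c) (restr (- N) c) = c"
  unfolding merge_def restr_def by auto

lemma sum_split:
  "(\<Sum>c\<in>configs n d. f c) = (\<Sum>x\<in>sub_configs n d N. \<Sum>y\<in>sub_configs n d (- N). f (merge N x y))"
proof -
  have bij: "bij_betw (\<lambda>(x, y). merge N x y) (sub_configs n d N \<times> sub_configs n d (- N)) (configs n d)"
  proof (rule bij_betw_byWitness[where f' = "\<lambda>c. (restr N c, restr (- N) c)"])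
    show "\<forall>a\<in>sub_configs n d N \<times> sub_configs n d (- N). (\<lambda>c. (restr N c, restr (- N) c)) ((\<lambda>(x, y). merge N x y) a) = a"
      using restr_merge1 restr_merge2 by fastforce
    show "\<forall>a'\<in>configs n d. (\<lambda>(x, y). merge N x y) ((\<lambda>c. (restr N c, restr (- N) c)) a') = a'"
      using merge_restr by auto
    show "(\<lambda>(x, y). merge N x y) ` (sub_configs n d N \<times> sub_configs n d (- N)) \<subseteq> configs n d"
      using merge_in by auto
    show "(\<lambda>c. (restr N c, restr (- N) c)) ` configs n d \<subseteq> sub_configs n d N \<times> sub_configs n d (- N)"
      using restr_in_sub by auto
  qed
  have "(\<Sum>c\<in>configs n d. f c) = (\<Sum>p\<in>sub_configs n d N \<times> sub_configs n d (- N). f ((\<lambda>(x, y). merge N x y) p))"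
    using sum.reindex_bij_betw[OF bij, of f] by simp
  also have "\<dots> = (\<Sum>(x,y)\<in>sub_configs n d N \<times> sub_configs n d (- N). f (merge N x y))"
    by (rule sum.cong) auto
  also have "\<dots> = (\<Sum>x\<in>sub_configs n d N. \<Sum>y\<in>sub_configs n d (- N). f (merge N x y))"
    by (rule sum.cartesian_product[symmetric])
  finally show ?thesis .
qed

lemma sum_fiber:
  assumes y: "y \<in> sub_configs n d (- N)"
  shows "(\<Sum>c\<in>configs n d. if restr (- N) c = y then f c else 0) = (\<Sum>x\<in>sub_configs n d N. f (merge N x y))"
proof -
  have "(\<Sum>c\<in>configs n d. if restr (- N) c = y then f c else 0)
      = (\<Sum>x\<in>sub_configs n d N. \<Sum>y'\<in>sub_configs n d (- N). if y' = y then f (merge N x y') else 0)"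
    by (subst sum_split[of _ _ _ N]) (intro sum.cong refl, simp add: restr_merge2)
  also have "\<dots> = (\<Sum>x\<in>sub_configs n d N. f (merge N x y))"
    using y finite_sub by (simp add: sum.delta')
  finally show ?thesis .
qed




lemma mapply_add: "mapply T A (\<lambda>i. u i + v i) = (\<lambda>i. mapply T A u i + mapply T A v i)"
  by (simp add: mapply_def distrib_left sum.distrib)
lemma mapply_scale: "mapply T A (\<lambda>i. a * u i) = (\<lambda>i. a * mapply T A u i)"
  by (simp add: mapply_def sum_distrib_left algebra_simps)
lemma mapply_diff: "mapply T A (\<lambda>i. u i - v i) = (\<lambda>i. mapply T A u i - mapply T A v i)"
  by (simp add: mapply_def right_diff_distrib sum_subtractf)
lemma mapply_zero: "mapply T A (\<lambda>_. 0) = (\<lambda>_. 0)"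
  by (simp add: mapply_def)

lemma vecs_add: "u \<in> vecs T \<Longrightarrow> v \<in> vecs T \<Longrightarrow> (\<lambda>i. u i + v i) \<in> vecs T"
  by (simp add: vecs_def)
lemma vecs_scale: "u \<in> vecs T \<Longrightarrow> (\<lambda>i. a * u i) \<in> vecs T"
  by (simp add: vecs_def)
lemma vecs_diff: "u \<in> vecs T \<Longrightarrow> v \<in> vecs T \<Longrightarrow> (\<lambda>i. u i - v i) \<in> vecs T"
  by (simp add: vecs_def)
lemma vecs_zero: "(\<lambda>_. 0) \<in> vecs T"
  by (simp add: vecs_def)

lemma subsp_vecs: "subsp (vecs T)"
  unfolding subsp_def by (simp add: vecs_def)

lemma subsp_supp: "subsp (supp T A)"
  unfolding subsp_def supp_def
proof (intro conjI ballI allI)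
  show "(\<lambda>_. 0) \<in> mapply T A ` vecs T"
    by (rule image_eqI[of _ _ "\<lambda>_. 0"]) (simp_all add: mapply_zero vecs_zero)
next
  fix u v assume "u \<in> mapply T A ` vecs T" "v \<in> mapply T A ` vecs T"
  then obtain u' v' where "u' \<in> vecs T" "v' \<in> vecs T" "u = mapply T A u'" "v = mapply T A v'" by blast
  thus "(\<lambda>i. u i + v i) \<in> mapply T A ` vecs T"
    by (intro image_eqI[of _ _ "\<lambda>i. u' i + v' i"]) (simp_all add: mapply_add vecs_add)
next
  fix a u assume "u \<in> mapply T A ` vecs T"
  then obtain u' where "u' \<in> vecs T" "u = mapply T A u'" by blast
  thus "(\<lambda>i. a * u i) \<in> mapply T A ` vecs T"
    by (intro image_eqI[of _ _ "\<lambda>i. a * u' i"]) (simp_all add: mapply_scale vecs_scale)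
qed

lemma supp_sub_vecs: "(\<And>i j. i \<notin> T \<Longrightarrow> A i j = 0) \<Longrightarrow> supp T A \<subseteq> vecs T"
  unfolding supp_def vecs_def mapply_def by auto

lemma mapply_in_supp: "v \<in> vecs T \<Longrightarrow> mapply T A v \<in> supp T A"
  unfolding supp_def by blast

lemma range_lemma:
  assumes T: "finite T" and A0: "\<And>i j. i \<notin> T \<Longrightarrow> A i j = 0" and v: "v \<in> vecs T"
    and H: "\<And>q. q \<in> vecs T \<Longrightarrow> inner_on T q (mapply T A q) = 0 \<Longrightarrow> inner_on T v q = 0"
  shows "v \<in> supp T A"
proof (rule in_subsp_by_orth[OF T subsp_supp supp_sub_vecs[OF A0] v])
  fix q assume q: "q \<in> vecs T" and o: "\<forall>w\<in>supp T A. inner_on T w q = 0"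
  have "inner_on T (mapply T A q) q = 0" using o mapply_in_supp[OF q] by blast
  hence "inner_on T q (mapply T A q) = 0" using inner_cnj[of T q "mapply T A q"] by simp
  thus "inner_on T v q = 0" by (rule H[OF q])
qed

lemma proj_exists:
  assumes T: "finite T" and K: "subsp K" "K \<subseteq> vecs T"
  shows "\<exists>P. supported_on T P \<and> (\<forall>v\<in>vecs T. mapply T P v \<in> K \<and> (\<forall>w\<in>K. inner_on T w (\<lambda>i. v i - mapply T P v i) = 0))"
proof -
  obtain F where F: "finite F" "F \<subseteq> K" "\<forall>v. (\<lambda>i. \<Sum>e\<in>F. inner_on T e v * e i) \<in> K \<and>
          (\<forall>w\<in>K. inner_on T w (\<lambda>i. v i - (\<Sum>e\<in>F. inner_on T e v * e i)) = 0)"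
    using proj_decomp[OF assms] by blast
  define P where "P = (\<lambda>i j. if i \<in> T \<and> j \<in> T then (\<Sum>e\<in>F. e i * cnj (e j)) else 0)"
  have Pv: "mapply T P v = (\<lambda>i. \<Sum>e\<in>F. inner_on T e v * e i)" if "v \<in> vecs T" for v
  proof
    fix i
    show "mapply T P v i = (\<Sum>e\<in>F. inner_on T e v * e i)"
    proof (cases "i \<in> T")
      case True
      have "mapply T P v i = (\<Sum>j\<in>T. \<Sum>e\<in>F. e i * cnj (e j) * v j)"
        unfolding mapply_def P_def using True by (simp add: sum_distrib_right)
      also have "\<dots> = (\<Sum>e\<in>F. \<Sum>j\<in>T. e i * (cnj (e j) * v j))"
        by (subst sum.swap) (simp add: mult.assoc)
      also have "\<dots> = (\<Sum>e\<in>F. e i * inner_on T e v)" by (simp add: inner_on_def sum_distrib_left)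
      also have "\<dots> = (\<Sum>e\<in>F. inner_on T e v * e i)" by (simp add: mult.commute)
      finally show ?thesis .
    next
      case False
      have "\<forall>e\<in>F. e i = 0" using F(2) K(2) False by (auto simp: vecs_def)
      hence "(\<Sum>e\<in>F. inner_on T e v * e i) = 0" by (intro sum.neutral) simp
      thus ?thesis using False unfolding mapply_def P_def by simp
    qed
  qed
  have "supported_on T P" unfolding supported_on_def P_def by auto
  thus ?thesis using F(3) Pv by (intro exI[of _ P]) simp
qed

definition isproj :: "cfg set \<Rightarrow> vect set \<Rightarrow> cmat \<Rightarrow> bool" where
  "isproj T K P \<longleftrightarrow> supported_on T P \<and> (\<forall>v\<in>vecs T. mapply T P v \<in> K \<and> (\<forall>w\<in>K. inner_on T w (\<lambda>i. v i - mapply T P v i) = 0))"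

lemma proj_isproj:
  assumes "finite T" "subsp K" "K \<subseteq> vecs T"
  shows "isproj T K (proj T K)"
proof -
  have "\<exists>P. isproj T K P" using proj_exists[OF assms] unfolding isproj_def .
  hence "isproj T K (SOME P. isproj T K P)" by (rule someI_ex)
  moreover have "proj T K = (SOME P. isproj T K P)" by (simp only: proj_def isproj_def)
  ultimately show ?thesis by simp
qed

lemma isproj_quad:
  assumes P: "isproj T K P" and v: "v \<in> vecs T"
  shows "inner_on T v (mapply T P v) = inner_on T (mapply T P v) (mapply T P v)"
proof -
  have PK: "mapply T P v \<in> K" and o: "\<forall>w\<in>K. inner_on T w (\<lambda>i. v i - mapply T P v i) = 0"
    using P v unfolding isproj_def by auto
  have "inner_on T (\<lambda>i. v i - mapply T P v i) (mapply T P v) = 0"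
    using o PK inner_cnj[of T "\<lambda>i. v i - mapply T P v i" "mapply T P v"] by simp
  thus ?thesis by (simp add: inner_diff_left)
qed

lemma isproj_left:
  assumes P: "isproj T K P" and v: "v \<in> vecs T" and w: "w \<in> K"
  shows "inner_on T w v = inner_on T w (mapply T P v)"
proof -
  have "inner_on T w (\<lambda>i. v i - mapply T P v i) = 0" using P v w unfolding isproj_def by auto
  thus ?thesis by (simp add: inner_diff_right)
qed




lemma quad_sum:
  fixes Q P :: "'x \<Rightarrow> 'y \<Rightarrow> complex"
  shows "(\<Sum>x\<in>X. \<Sum>y\<in>Y. cnj (Q x y) * (\<Sum>x'\<in>X. (\<Sum>z\<in>Y. P x z * cnj (P x' z)) * Q x' y))
       = (\<Sum>y\<in>Y. \<Sum>z\<in>Y. cnj (\<Sum>x\<in>X. cnj (P x z) * Q x y) * (\<Sum>x\<in>X. cnj (P x z) * Q x y))"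
proof -
  have "(\<Sum>x\<in>X. \<Sum>y\<in>Y. cnj (Q x y) * (\<Sum>x'\<in>X. (\<Sum>z\<in>Y. P x z * cnj (P x' z)) * Q x' y))
      = (\<Sum>x\<in>X. \<Sum>y\<in>Y. \<Sum>x'\<in>X. \<Sum>z\<in>Y. cnj (Q x y) * P x z * cnj (P x' z) * Q x' y)"
    by (simp add: sum_distrib_left sum_distrib_right mult.assoc)
  also have "\<dots> = (\<Sum>y\<in>Y. \<Sum>x\<in>X. \<Sum>x'\<in>X. \<Sum>z\<in>Y. cnj (Q x y) * P x z * cnj (P x' z) * Q x' y)"
    by (rule sum.swap)
  also have "\<dots> = (\<Sum>y\<in>Y. \<Sum>x\<in>X. \<Sum>z\<in>Y. \<Sum>x'\<in>X. cnj (Q x y) * P x z * cnj (P x' z) * Q x' y)"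
    by (intro sum.cong refl) (rule sum.swap)
  also have "\<dots> = (\<Sum>y\<in>Y. \<Sum>z\<in>Y. \<Sum>x\<in>X. \<Sum>x'\<in>X. cnj (Q x y) * P x z * cnj (P x' z) * Q x' y)"
    by (intro sum.cong refl) (rule sum.swap)
  also have "\<dots> = (\<Sum>y\<in>Y. \<Sum>z\<in>Y. \<Sum>x\<in>X. \<Sum>x'\<in>X. (P x z * cnj (Q x y)) * (cnj (P x' z) * Q x' y))"
    by (intro sum.cong refl) (simp add: mult.commute mult.left_commute)
  also have "\<dots> = (\<Sum>y\<in>Y. \<Sum>z\<in>Y. cnj (\<Sum>x\<in>X. cnj (P x z) * Q x y) * (\<Sum>x\<in>X. cnj (P x z) * Q x y))"
    by (simp only: cnj_sum complex_cnj_mult complex_cnj_cnj sum_product)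
  finally show ?thesis .
qed

lemma sum_cnj_sq_zero:
  assumes "finite Y" "(\<Sum>y\<in>Y. \<Sum>z\<in>Y. cnj (g y z) * g y z) = 0" "y \<in> Y" "z \<in> Y"
  shows "g y z = (0::complex)"
proof -
  have "(\<Sum>y\<in>Y. \<Sum>z\<in>Y. cnj (g y z) * g y z) = complex_of_real (\<Sum>y\<in>Y. \<Sum>z\<in>Y. (cmod (g y z))\<^sup>2)"
    by (simp add: cnj_mult_self)
  hence "complex_of_real (\<Sum>y\<in>Y. \<Sum>z\<in>Y. (cmod (g y z))\<^sup>2) = 0" using assms(2) by simp
  hence "(\<Sum>y\<in>Y. \<Sum>z\<in>Y. (cmod (g y z))\<^sup>2) = 0" by (simp only: of_real_eq_0_iff)
  hence "\<forall>y\<in>Y. (\<Sum>z\<in>Y. (cmod (g y z))\<^sup>2) = 0"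
    using assms(1) by (subst (asm) sum_nonneg_eq_0_iff) (auto intro: sum_nonneg)
  hence "(\<Sum>z\<in>Y. (cmod (g y z))\<^sup>2) = 0" using assms(3) by blast
  hence "(cmod (g y z))\<^sup>2 = 0" using assms(1,4) by (subst (asm) sum_nonneg_eq_0_iff) auto
  thus ?thesis by simp
qed

lemma kron_apply:
  assumes c: "c \<in> configs n d"
  shows "mapply (configs n d) (kron_id n d N A) q c
       = (\<Sum>x'\<in>sub_configs n d N. A (restr N c) x' * q (merge N x' (restr (- N) c)))"
proof -
  have "mapply (configs n d) (kron_id n d N A) q c
      = (\<Sum>c'\<in>configs n d. if restr (- N) c' = restr (- N) c then A (restr N c) (restr N c') * q c' else 0)"
    unfolding mapply_def kron_id_def using c by (intro sum.cong refl) auto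
  also have "\<dots> = (\<Sum>x'\<in>sub_configs n d N. A (restr N c) x' * q (merge N x' (restr (- N) c)))"
    by (subst sum_fiber[OF restr_in_sub[OF c]]) (simp add: restr_merge1)
  finally show ?thesis .
qed

lemma ptrace_merge:
  "x \<in> sub_configs n d N \<Longrightarrow> x' \<in> sub_configs n d N \<Longrightarrow>
   ptrace n d N \<rho> x x' = (\<Sum>y\<in>sub_configs n d (- N). \<rho> (merge N x y) (merge N x' y))"
  unfolding ptrace_def merge_def by simp

lemma Psi_in_supp:
  assumes Psi: "\<Psi> \<in> vecs (configs n d)"
  shows "\<Psi> \<in> supp (configs n d) (kron_id n d N (ptrace n d N (rho_d \<Psi>)))"
proof (rule range_lemma[OF finite_configs _ Psi])
  fix i j assume "i \<notin> configs n d"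
  thus "kron_id n d N (ptrace n d N (rho_d \<Psi>)) i j = 0" by (simp add: kron_id_def)
next
  fix q assume q: "q \<in> vecs (configs n d)"
    and z: "inner_on (configs n d) q (mapply (configs n d) (kron_id n d N (ptrace n d N (rho_d \<Psi>))) q) = 0"
  let ?X = "sub_configs n d N" and ?Y = "sub_configs n d (- N)"
  let ?Q = "\<lambda>x y. q (merge N x y)" and ?P = "\<lambda>x z. \<Psi> (merge N x z)"
  let ?g = "\<lambda>y z. \<Sum>x\<in>?X. cnj (?P x z) * ?Q x y"
  have "inner_on (configs n d) q (mapply (configs n d) (kron_id n d N (ptrace n d N (rho_d \<Psi>))) q)
      = (\<Sum>x\<in>?X. \<Sum>y\<in>?Y. cnj (?Q x y) * (\<Sum>x'\<in>?X. (\<Sum>z\<in>?Y. ?P x z * cnj (?P x' z)) * ?Q x' y))"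
    unfolding inner_on_def
    apply (subst sum_split[of _ _ _ N])
    apply (intro sum.cong refl)
    apply (simp add: kron_apply merge_in restr_merge1 restr_merge2 ptrace_merge rho_d_def)
    done
  also have "\<dots> = (\<Sum>y\<in>?Y. \<Sum>z\<in>?Y. cnj (?g y z) * ?g y z)" by (rule quad_sum)
  finally have G: "(\<Sum>y\<in>?Y. \<Sum>z\<in>?Y. cnj (?g y z) * ?g y z) = 0" using z by simp
  have g0: "?g y y = 0" if "y \<in> ?Y" for y using sum_cnj_sq_zero[OF finite_sub G that that] .
  have "inner_on (configs n d) \<Psi> q = (\<Sum>x\<in>?X. \<Sum>y\<in>?Y. cnj (?P x y) * ?Q x y)"
    unfolding inner_on_def by (rule sum_split)
  also have "\<dots> = (\<Sum>y\<in>?Y. ?g y y)" by (rule sum.swap)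
  also have "\<dots> = 0" using g0 by simp
  finally show "inner_on (configs n d) \<Psi> q = 0" .
qed




definition slice :: "nat \<Rightarrow> (nat \<Rightarrow> nat) \<Rightarrow> nat set \<Rightarrow> vect \<Rightarrow> cfg \<Rightarrow> vect" where
  "slice n d N w y = (\<lambda>x. if x \<in> sub_configs n d N then w (merge N x y) else 0)"

definition lift :: "nat \<Rightarrow> (nat \<Rightarrow> nat) \<Rightarrow> nat set \<Rightarrow> vect \<Rightarrow> cfg \<Rightarrow> vect" where
  "lift n d N q y = (\<lambda>c. if c \<in> configs n d \<and> restr (- N) c = y then q (restr N c) else 0)"

lemma lift_vecs: "lift n d N q y \<in> vecs (configs n d)"
  by (simp add: lift_def vecs_def)

lemma inner_lift:
  assumes y: "y \<in> sub_configs n d (- N)"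
  shows "inner_on (configs n d) w (lift n d N q y) = inner_on (sub_configs n d N) (slice n d N w y) q"
proof -
  have "inner_on (configs n d) w (lift n d N q y)
      = (\<Sum>c\<in>configs n d. if restr (- N) c = y then cnj (w c) * q (restr N c) else 0)"
    unfolding inner_on_def lift_def by (intro sum.cong refl) auto
  also have "\<dots> = (\<Sum>x\<in>sub_configs n d N. cnj (w (merge N x y)) * q x)"
    by (subst sum_fiber[OF y]) (simp add: restr_merge1)
  also have "\<dots> = inner_on (sub_configs n d N) (slice n d N w y) q"
    unfolding inner_on_def slice_def by (intro sum.cong refl) auto
  finally show ?thesis .
qed

lemma mapply_lift:
  assumes y: "y \<in> sub_configs n d (- N)" and c: "c \<in> configs n d"
  shows "mapply (configs n d) P (lift n d N q y) c = (\<Sum>x'\<in>sub_configs n d N. P c (merge N x' y) * q x')"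
proof -
  have "mapply (configs n d) P (lift n d N q y) c
      = (\<Sum>c'\<in>configs n d. if restr (- N) c' = y then P c c' * q (restr N c') else 0)"
    unfolding mapply_def lift_def by (intro sum.cong refl) auto
  also have "\<dots> = (\<Sum>x'\<in>sub_configs n d N. P c (merge N x' y) * q x')"
    by (subst sum_fiber[OF y]) (simp add: restr_merge1)
  finally show ?thesis .
qed

lemma quad_lift:
  assumes y: "y \<in> sub_configs n d (- N)"
  shows "inner_on (configs n d) (lift n d N q y) (mapply (configs n d) P (lift n d N q y))
     = (\<Sum>x\<in>sub_configs n d N. cnj (q x) * (\<Sum>x'\<in>sub_configs n d N. P (merge N x y) (merge N x' y) * q x'))"
proof -
  have "inner_on (configs n d) (lift n d N q y) (mapply (configs n d) P (lift n d N q y))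
     = (\<Sum>c\<in>configs n d. if restr (- N) c = y then cnj (q (restr N c)) *
           (\<Sum>x'\<in>sub_configs n d N. P c (merge N x' y) * q x') else 0)"
    unfolding inner_on_def
  proof (intro sum.cong refl)
    fix c assume c: "c \<in> configs n d"
    show "cnj (lift n d N q y c) * mapply (configs n d) P (lift n d N q y) c =
      (if restr (- N) c = y then cnj (q (restr N c)) * (\<Sum>x'\<in>sub_configs n d N. P c (merge N x' y) * q x') else 0)"
      by (simp only: mapply_lift[OF y c]) (simp add: lift_def c)
  qed
  also have "\<dots> = (\<Sum>x\<in>sub_configs n d N. cnj (q x) * (\<Sum>x'\<in>sub_configs n d N. P (merge N x y) (merge N x' y) * q x'))"
    by (subst sum_fiber[OF y]) (simp add: restr_merge1)
  finally show ?thesis .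
qed

lemma slice_in_supp:
  assumes K: "subsp K" "K \<subseteq> vecs (configs n d)" and P: "isproj (configs n d) K P"
    and w: "w \<in> K" and y: "y \<in> sub_configs n d (- N)"
  shows "slice n d N w y \<in> supp (sub_configs n d N) (ptrace n d N P)"
proof (rule range_lemma[OF finite_sub])
  fix i j assume "i \<notin> sub_configs n d N"
  thus "ptrace n d N P i j = 0" by (simp add: ptrace_def)
next
  show "slice n d N w y \<in> vecs (sub_configs n d N)" by (simp add: slice_def vecs_def)
next
  fix q assume q: "q \<in> vecs (sub_configs n d N)"
    and z: "inner_on (sub_configs n d N) q (mapply (sub_configs n d N) (ptrace n d N P) q) = 0"
  let ?X = "sub_configs n d N" and ?Y = "sub_configs n d (- N)"
  let ?S = "configs n d"
  define h where "h y' = inner_on ?S (lift n d N q y') (mapply ?S P (lift n d N q y'))" for y'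
  have hnn: "h y' = complex_of_real (\<Sum>c\<in>?S. (cmod (mapply ?S P (lift n d N q y') c))\<^sup>2)" for y'
    unfolding h_def by (simp add: isproj_quad[OF P lift_vecs] inner_self)
  have "inner_on ?X q (mapply ?X (ptrace n d N P) q)
      = (\<Sum>x\<in>?X. cnj (q x) * (\<Sum>x'\<in>?X. (\<Sum>y'\<in>?Y. P (merge N x y') (merge N x' y')) * q x'))"
    unfolding inner_on_def mapply_def by (intro sum.cong refl) (simp add: ptrace_merge)
  also have "\<dots> = (\<Sum>x\<in>?X. \<Sum>y'\<in>?Y. cnj (q x) * (\<Sum>x'\<in>?X. P (merge N x y') (merge N x' y') * q x'))"
  proof -
    have "\<And>x. (\<Sum>x'\<in>?X. (\<Sum>y'\<in>?Y. P (merge N x y') (merge N x' y')) * q x')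
        = (\<Sum>y'\<in>?Y. \<Sum>x'\<in>?X. P (merge N x y') (merge N x' y') * q x')"
      by (simp add: sum_distrib_right) (rule sum.swap)
    thus ?thesis by (simp add: sum_distrib_left)
  qed
  also have "\<dots> = (\<Sum>y'\<in>?Y. h y')"
    by (subst sum.swap) (simp add: h_def quad_lift)
  finally have "(\<Sum>y'\<in>?Y. h y') = 0" using z by simp
  hence "complex_of_real (\<Sum>y'\<in>?Y. \<Sum>c\<in>?S. (cmod (mapply ?S P (lift n d N q y') c))\<^sup>2) = 0"
    by (simp add: hnn)
  hence "(\<Sum>y'\<in>?Y. \<Sum>c\<in>?S. (cmod (mapply ?S P (lift n d N q y') c))\<^sup>2) = 0"
    by (simp only: of_real_eq_0_iff)
  hence "\<forall>y'\<in>?Y. (\<Sum>c\<in>?S. (cmod (mapply ?S P (lift n d N q y') c))\<^sup>2) = 0"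
    using finite_sub by (subst (asm) sum_nonneg_eq_0_iff) (auto intro: sum_nonneg)
  hence "(\<Sum>c\<in>?S. (cmod (mapply ?S P (lift n d N q y) c))\<^sup>2) = 0" using y by blast
  hence "inner_on ?S (mapply ?S P (lift n d N q y)) (mapply ?S P (lift n d N q y)) = 0"
    by (simp add: inner_self)
  moreover have "mapply ?S P (lift n d N q y) \<in> vecs ?S"
    using P K(2) lift_vecs unfolding isproj_def by blast
  ultimately have P0: "mapply ?S P (lift n d N q y) = (\<lambda>_. 0)"
    using inner_self_eq0[OF finite_configs] by blast
  have "inner_on ?X (slice n d N w y) q = inner_on ?S w (lift n d N q y)"
    by (rule inner_lift[OF y, symmetric])
  also have "\<dots> = inner_on ?S w (mapply ?S P (lift n d N q y))"
    by (rule isproj_left[OF P lift_vecs w])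
  also have "\<dots> = 0" using P0 by simp
  finally show "inner_on ?X (slice n d N w y) q = 0" .
qed

lemma subsp_cspan: "subsp (cspan X)"
  unfolding subsp_def
proof (intro conjI ballI allI)
  show "(\<lambda>_. 0) \<in> cspan X" unfolding cspan_def by (intro CollectI exI[of _ "{}"] exI[of _ "\<lambda>_. 0"]) simp
next
  fix u v assume "u \<in> cspan X" "v \<in> cspan X"
  then obtain F1 a1 F2 a2 where 1: "finite F1" "F1 \<subseteq> X" "u = (\<lambda>i. \<Sum>x\<in>F1. a1 x * x i)"
    and 2: "finite F2" "F2 \<subseteq> X" "v = (\<lambda>i. \<Sum>x\<in>F2. a2 x * x i)" unfolding cspan_def by blast
  define a where "a x = (if x \<in> F1 then a1 x else 0) + (if x \<in> F2 then a2 x else 0)" for x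
  have E: "(\<lambda>i. u i + v i) = (\<lambda>i. \<Sum>x\<in>F1 \<union> F2. a x * x i)"
  proof
    fix i
    have e1: "(\<Sum>x\<in>F1 \<union> F2. (if x \<in> F1 then a1 x else 0) * x i) = (\<Sum>x\<in>F1. a1 x * x i)"
    proof -
      have "(\<Sum>x\<in>F1 \<union> F2. (if x \<in> F1 then a1 x else 0) * x i) = (\<Sum>x\<in>F1 \<union> F2. if x \<in> F1 then a1 x * x i else 0)"
        by (intro sum.cong refl) simp
      also have "\<dots> = (\<Sum>x\<in>(F1 \<union> F2) \<inter> F1. a1 x * x i)"
        by (rule sum.inter_restrict[symmetric]) (use 1(1) 2(1) in simp)
      also have "(F1 \<union> F2) \<inter> F1 = F1" by blast
      finally show ?thesis .
    qed
    have e2: "(\<Sum>x\<in>F1 \<union> F2. (if x \<in> F2 then a2 x else 0) * x i) = (\<Sum>x\<in>F2. a2 x * x i)"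
    proof -
      have "(\<Sum>x\<in>F1 \<union> F2. (if x \<in> F2 then a2 x else 0) * x i) = (\<Sum>x\<in>F1 \<union> F2. if x \<in> F2 then a2 x * x i else 0)"
        by (intro sum.cong refl) simp
      also have "\<dots> = (\<Sum>x\<in>(F1 \<union> F2) \<inter> F2. a2 x * x i)"
        by (rule sum.inter_restrict[symmetric]) (use 1(1) 2(1) in simp)
      also have "(F1 \<union> F2) \<inter> F2 = F2" by blast
      finally show ?thesis .
    qed
    show "u i + v i = (\<Sum>x\<in>F1 \<union> F2. a x * x i)"
      unfolding a_def distrib_right sum.distrib e1 e2 using 1(3) 2(3) by simp
  qed
  show "(\<lambda>i. u i + v i) \<in> cspan X" unfolding cspan_def
    by (intro CollectI exI[of _ "F1 \<union> F2"] exI[of _ a] conjI E) (use 1(1,2) 2(1,2) in auto)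
next
  fix c u assume "u \<in> cspan X"
  then obtain F a where 1: "finite F" "F \<subseteq> X" "u = (\<lambda>i. \<Sum>x\<in>F. a x * x i)" unfolding cspan_def by blast
  have E: "(\<lambda>i. c * u i) = (\<lambda>i. \<Sum>x\<in>F. (c * a x) * x i)"
    using 1(3) by (simp add: sum_distrib_left mult.assoc)
  show "(\<lambda>i. c * u i) \<in> cspan X" unfolding cspan_def
    by (intro CollectI exI[of _ F] exI[of _ "\<lambda>x. c * a x"] conjI E) (use 1(1,2) in auto)
qed

lemma cspan_base: "x \<in> X \<Longrightarrow> x \<in> cspan X"
  unfolding cspan_def by (intro CollectI exI[of _ "{x}"] exI[of _ "\<lambda>_. 1"]) auto

lemma in_tensor_full:
  assumes w: "w \<in> vecs (configs n d)"
    and sl: "\<And>y. y \<in> sub_configs n d (- N) \<Longrightarrow> slice n d N w y \<in> K"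
  shows "w \<in> tensor_full n d N K"
proof -
  let ?G = "{(\<lambda>c. if c \<in> configs n d then v (restr N c) * u (restr (- N) c) else 0)
                              | v u. v \<in> K \<and> u \<in> vecs (sub_configs n d (- N))}"
  let ?f = "\<lambda>y c. if c \<in> configs n d then slice n d N w y (restr N c) * delta y (restr (- N) c) else 0"
  have "?f y \<in> ?G" if "y \<in> sub_configs n d (- N)" for y
  proof -
    have "delta y \<in> vecs (sub_configs n d (- N))" using that by (simp add: delta_def vecs_def)
    thus ?thesis using sl[OF that] by blast
  qed
  hence "(\<lambda>i. \<Sum>y\<in>sub_configs n d (- N). ?f y i) \<in> cspan ?G"
    by (intro subsp_sum[OF subsp_cspan] cspan_base)
  moreover have "w = (\<lambda>i. \<Sum>y\<in>sub_configs n d (- N). ?f y i)"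
  proof
    fix c show "w c = (\<Sum>y\<in>sub_configs n d (- N). ?f y c)"
    proof (cases "c \<in> configs n d")
      case True
      have "(\<Sum>y\<in>sub_configs n d (- N). ?f y c)
          = (\<Sum>y\<in>sub_configs n d (- N). if y = restr (- N) c then slice n d N w y (restr N c) else 0)"
        using True by (intro sum.cong refl) (auto simp: delta_def)
      also have "\<dots> = slice n d N w (restr (- N) c) (restr N c)"
        using finite_sub restr_in_sub[OF True] by (simp add: sum.delta)
      also have "\<dots> = w c" using restr_in_sub[OF True] by (simp add: slice_def merge_restr)
      finally show ?thesis by simp
    next
      case False thus ?thesis using w by (simp add: vecs_def)
    qed
  qed
  ultimately show ?thesis unfolding tensor_full_def by simp
qed




definition nrm :: "cfg set \<Rightarrow> cmat \<Rightarrow> real" where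
  "nrm S X = (\<Sum>i\<in>S. \<Sum>j\<in>S. cmod (X i j))"

lemma nrm_ge0: "nrm S X \<ge> 0"
  unfolding nrm_def by (intro sum_nonneg) auto

lemma entry_le_nrm:
  assumes "finite S" "i \<in> S" "j \<in> S" shows "cmod (X i j) \<le> nrm S X"
proof -
  have "cmod (X i j) \<le> (\<Sum>j\<in>S. cmod (X i j))"
    using assms by (intro member_le_sum) auto
  also have "\<dots> \<le> nrm S X" unfolding nrm_def
    using assms by (intro member_le_sum[of i S "\<lambda>i. \<Sum>j\<in>S. cmod (X i j)"]) (auto intro: sum_nonneg)
  finally show ?thesis .
qed

lemma nrm_mmul:
  assumes S: "finite S" shows "nrm S (mmul S A B) \<le> nrm S A * nrm S B"
proof -
  have "nrm S (mmul S A B) \<le> (\<Sum>i\<in>S. \<Sum>j\<in>S. \<Sum>c\<in>S. cmod (A i c) * cmod (B c j))"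
    unfolding nrm_def mmul_def
    by (intro sum_mono, rule order_trans[OF norm_sum]) (simp add: norm_mult)
  also have "\<dots> = (\<Sum>i\<in>S. \<Sum>c\<in>S. cmod (A i c) * (\<Sum>j\<in>S. cmod (B c j)))"
    by (rule sum.cong[OF refl]) (subst sum.swap, simp add: sum_distrib_left)
  also have "\<dots> \<le> (\<Sum>i\<in>S. \<Sum>c\<in>S. cmod (A i c) * nrm S B)"
  proof (intro sum_mono mult_left_mono)
    fix i c assume "c \<in> S"
    thus "(\<Sum>j\<in>S. cmod (B c j)) \<le> nrm S B" unfolding nrm_def
      using S by (intro member_le_sum[of c S "\<lambda>i. \<Sum>j\<in>S. cmod (B i j)"]) (auto intro: sum_nonneg)
  qed simp
  also have "\<dots> = nrm S A * nrm S B" unfolding nrm_def by (simp add: sum_distrib_right)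
  finally show ?thesis .
qed

lemma nrm_adj: "nrm S (adj A) = nrm S A"
  unfolding nrm_def adj_def by (simp, rule sum.swap)

lemma tri: "cmod (a - (1/2) * (b + c)) \<le> cmod a + cmod b / 2 + cmod c / 2"
proof -
  have "cmod (a - (1/2) * (b + c)) \<le> cmod a + cmod ((1/2) * (b + c))" by (rule norm_triangle_ineq4)
  also have "cmod ((1/2) * (b + c)) = cmod (b + c) / 2" by (simp add: norm_mult)
  also have "cmod (b + c) \<le> cmod b + cmod c" by (rule norm_triangle_ineq)
  finally show ?thesis by (simp add: add_divide_distrib add.assoc)
qed

lemma lindblad_bound:
  assumes S: "finite S"
  shows "nrm S (lindblad0 S M K X) \<le> (\<Sum>k<M. 2 * (nrm S (K k))\<^sup>2) * nrm S X"
proof -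
  define T1 where "T1 k = mmul S (mmul S (K k) X) (adj (K k))" for k
  define T2 where "T2 k = mmul S (mmul S (adj (K k)) (K k)) X" for k
  define T3 where "T3 k = mmul S X (mmul S (adj (K k)) (K k))" for k
  have b1: "nrm S (T1 k) \<le> (nrm S (K k))\<^sup>2 * nrm S X" for k
  proof -
    have "nrm S (T1 k) \<le> nrm S (mmul S (K k) X) * nrm S (adj (K k))" unfolding T1_def by (rule nrm_mmul[OF S])
    also have "\<dots> \<le> (nrm S (K k) * nrm S X) * nrm S (K k)"
      by (simp add: nrm_adj mult_right_mono nrm_mmul[OF S] nrm_ge0)
    finally show ?thesis by (simp add: power2_eq_square algebra_simps)
  qed
  have b2: "nrm S (T2 k) \<le> (nrm S (K k))\<^sup>2 * nrm S X" for k
  proof -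
    have "nrm S (T2 k) \<le> nrm S (mmul S (adj (K k)) (K k)) * nrm S X" unfolding T2_def by (rule nrm_mmul[OF S])
    also have "\<dots> \<le> (nrm S (K k) * nrm S (K k)) * nrm S X"
      using nrm_mmul[OF S, of "adj (K k)" "K k"] by (simp add: nrm_adj mult_right_mono nrm_ge0)
    finally show ?thesis by (simp add: power2_eq_square algebra_simps)
  qed
  have b3: "nrm S (T3 k) \<le> (nrm S (K k))\<^sup>2 * nrm S X" for k
  proof -
    have "nrm S (T3 k) \<le> nrm S X * nrm S (mmul S (adj (K k)) (K k))" unfolding T3_def by (rule nrm_mmul[OF S])
    also have "\<dots> \<le> nrm S X * (nrm S (K k) * nrm S (K k))"
      using nrm_mmul[OF S, of "adj (K k)" "K k"] by (simp add: nrm_adj mult_left_mono nrm_ge0)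
    finally show ?thesis by (simp add: power2_eq_square algebra_simps)
  qed
  have ent: "cmod (lindblad0 S M K X i j) \<le> (\<Sum>k<M. cmod (T1 k i j) + cmod (T2 k i j) / 2 + cmod (T3 k i j) / 2)" for i j
  proof -
    have "lindblad0 S M K X i j = (\<Sum>k<M. T1 k i j - (1/2) * (T2 k i j + T3 k i j))"
      unfolding lindblad0_def T1_def T2_def T3_def by (rule refl)
    hence "cmod (lindblad0 S M K X i j) \<le> (\<Sum>k<M. cmod (T1 k i j - (1/2) * (T2 k i j + T3 k i j)))"
      by (simp only: norm_sum)
    also have "\<dots> \<le> (\<Sum>k<M. cmod (T1 k i j) + cmod (T2 k i j) / 2 + cmod (T3 k i j) / 2)"
      by (rule sum_mono) (rule tri)
    finally show ?thesis .
  qed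
  have "nrm S (lindblad0 S M K X) \<le> (\<Sum>i\<in>S. \<Sum>j\<in>S. \<Sum>k<M. cmod (T1 k i j) + cmod (T2 k i j) / 2 + cmod (T3 k i j) / 2)"
    unfolding nrm_def by (intro sum_mono ent)
  also have "\<dots> = (\<Sum>k<M. \<Sum>i\<in>S. \<Sum>j\<in>S. cmod (T1 k i j) + cmod (T2 k i j) / 2 + cmod (T3 k i j) / 2)"
  proof -
    have "\<And>i. (\<Sum>j\<in>S. \<Sum>k<M. cmod (T1 k i j) + cmod (T2 k i j) / 2 + cmod (T3 k i j) / 2)
       = (\<Sum>k<M. \<Sum>j\<in>S. cmod (T1 k i j) + cmod (T2 k i j) / 2 + cmod (T3 k i j) / 2)"
      by (rule sum.swap)
    hence "(\<Sum>i\<in>S. \<Sum>j\<in>S. \<Sum>k<M. cmod (T1 k i j) + cmod (T2 k i j) / 2 + cmod (T3 k i j) / 2)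
       = (\<Sum>i\<in>S. \<Sum>k<M. \<Sum>j\<in>S. cmod (T1 k i j) + cmod (T2 k i j) / 2 + cmod (T3 k i j) / 2)"
      by simp
    also have "\<dots> = (\<Sum>k<M. \<Sum>i\<in>S. \<Sum>j\<in>S. cmod (T1 k i j) + cmod (T2 k i j) / 2 + cmod (T3 k i j) / 2)"
      by (rule sum.swap)
    finally show ?thesis .
  qed
  also have "\<dots> = (\<Sum>k<M. nrm S (T1 k) + nrm S (T2 k) / 2 + nrm S (T3 k) / 2)"
    unfolding nrm_def by (simp add: sum.distrib sum_divide_distrib)
  also have "\<dots> \<le> (\<Sum>k<M. 2 * (nrm S (K k))\<^sup>2 * nrm S X)"
  proof (rule sum_mono)
    fix k show "nrm S (T1 k) + nrm S (T2 k) / 2 + nrm S (T3 k) / 2 \<le> 2 * (nrm S (K k))\<^sup>2 * nrm S X"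
      using b1[of k] b2[of k] b3[of k] by linarith
  qed
  also have "\<dots> = (\<Sum>k<M. 2 * (nrm S (K k))\<^sup>2) * nrm S X" by (simp add: sum_distrib_right)
  finally show ?thesis .
qed




definition lann :: "cfg set \<Rightarrow> vect \<Rightarrow> cmat \<Rightarrow> bool" where
  "lann S w A \<longleftrightarrow> (\<forall>c\<in>S. (\<Sum>i\<in>S. cnj (w i) * A i c) = 0)"

lemma lann_mmul: "lann S w A \<Longrightarrow> (\<Sum>i\<in>S. cnj (w i) * mmul S A B i j) = 0"
proof -
  assume a: "lann S w A"
  have "(\<Sum>i\<in>S. cnj (w i) * mmul S A B i j) = (\<Sum>c\<in>S. (\<Sum>i\<in>S. cnj (w i) * A i c) * B c j)"
    unfolding mmul_def by (simp add: sum_distrib_left sum_distrib_right mult.assoc) (rule sum.swap)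
  also have "\<dots> = 0" using a unfolding lann_def by simp
  finally show ?thesis .
qed

lemma lann_mmul': "lann S w A \<Longrightarrow> lann S w (mmul S A B)"
  using lann_mmul unfolding lann_def by blast

lemma lann_adj: "(\<forall>c\<in>S. mapply S K w c = 0) \<Longrightarrow> lann S w (adj K)"
  unfolding lann_def adj_def mapply_def
proof
  fix c assume a: "\<forall>c\<in>S. (\<Sum>j\<in>S. K c j * w j) = 0" and c: "c \<in> S"
  have "(\<Sum>i\<in>S. cnj (w i) * cnj (K c i)) = cnj (\<Sum>j\<in>S. K c j * w j)" by (simp add: mult.commute)
  thus "(\<Sum>i\<in>S. cnj (w i) * cnj (K c i)) = 0" using a c by simp
qed

lemma lind_lann:
  assumes K1: "\<forall>k<M. \<forall>c\<in>S. mapply S (K k) w c = 0" and K2: "\<forall>k<M. lann S w (K k)"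
    and X: "lann S w X"
  shows "(\<Sum>i\<in>S. cnj (w i) * lindblad0 S M K X i j) = 0"
proof -
  have "(\<Sum>i\<in>S. cnj (w i) * lindblad0 S M K X i j)
      = (\<Sum>k<M. (\<Sum>i\<in>S. cnj (w i) * mmul S (mmul S (K k) X) (adj (K k)) i j)
           - (1/2) * ((\<Sum>i\<in>S. cnj (w i) * mmul S (mmul S (adj (K k)) (K k)) X i j)
                    + (\<Sum>i\<in>S. cnj (w i) * mmul S X (mmul S (adj (K k)) (K k)) i j)))"
    unfolding lindblad0_def
    by (simp add: sum_distrib_left right_diff_distrib distrib_left sum_subtractf sum.distrib mult.left_commute)
       (simp only: sum.swap[where A=S and B="{..<M}"])
  also have "\<dots> = 0"
  proof (rule sum.neutral, rule ballI)
    fix k assume "k \<in> {..<M}"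
    hence k: "k < M" by simp
    have 1: "lann S w (mmul S (K k) X)" using K2 k lann_mmul' by blast
    have 2: "lann S w (mmul S (adj (K k)) (K k))" using lann_mmul'[OF lann_adj] K1 k by blast
    show "(\<Sum>i\<in>S. cnj (w i) * mmul S (mmul S (K k) X) (adj (K k)) i j)
           - (1/2) * ((\<Sum>i\<in>S. cnj (w i) * mmul S (mmul S (adj (K k)) (K k)) X i j)
                    + (\<Sum>i\<in>S. cnj (w i) * mmul S X (mmul S (adj (K k)) (K k)) i j)) = 0"
      using lann_mmul[OF 1] lann_mmul[OF 2] lann_mmul[OF X] by simp
  qed
  finally show ?thesis .
qed

lemma pow_bound:
  assumes B: "\<And>X. nrm S (L X) \<le> C * nrm S X" and C: "C \<ge> 0"
  shows "nrm S ((L ^^ m) X) \<le> C ^ m * nrm S X"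
proof (induction m)
  case 0 thus ?case by simp
next
  case (Suc m)
  have "nrm S ((L ^^ Suc m) X) \<le> C * nrm S ((L ^^ m) X)" using B by simp
  also have "\<dots> \<le> C * (C ^ m * nrm S X)" using Suc C by (rule mult_left_mono)
  finally show ?case by (simp add: mult.assoc)
qed

lemma series_summable:
  assumes S: "finite S" and i: "i \<in> S" and j: "j \<in> S"
    and B: "\<And>X. nrm S (L X) \<le> C * nrm S X" and C: "C \<ge> 0"
  shows "summable (\<lambda>m. complex_of_real (t ^ m / fact m) * (L ^^ m) X i j)"
proof (rule summable_comparison_test'[where N=0])
  show "summable (\<lambda>m. nrm S X * (inverse (fact m) * (\<bar>t\<bar> * C) ^ m))"
    by (rule summable_mult) (rule summable_exp)
next
  fix m :: nat
  have "norm (complex_of_real (t ^ m / fact m) * (L ^^ m) X i j) = \<bar>t\<bar> ^ m / fact m * cmod ((L ^^ m) X i j)"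
    by (simp add: norm_mult norm_divide norm_power)
  also have "\<dots> \<le> \<bar>t\<bar> ^ m / fact m * (C ^ m * nrm S X)"
    by (intro mult_left_mono order_trans[OF entry_le_nrm[OF S i j] pow_bound[OF B C]]) simp
  also have "\<dots> = nrm S X * (inverse (fact m) * (\<bar>t\<bar> * C) ^ m)"
    by (simp add: power_mult_distrib field_simps)
  finally show "norm (complex_of_real (t ^ m / fact m) * (L ^^ m) X i j) \<le> nrm S X * (inverse (fact m) * (\<bar>t\<bar> * C) ^ m)" .
qed

lemma evol_lann:
  assumes S: "finite S" and B: "\<And>X. nrm S (L X) \<le> C * nrm S X" and C: "C \<ge> 0"
    and inv: "\<And>X. lann S w X \<Longrightarrow> lann S w (L X)" and X: "lann S w X"
  shows "lann S w (evol L t X)"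
  unfolding lann_def
proof
  fix c assume c: "c \<in> S"
  have pw: "lann S w ((L ^^ m) X)" for m by (induction m) (simp_all add: X inv)
  have "(\<Sum>i\<in>S. cnj (w i) * evol L t X i c)
      = (\<Sum>i\<in>S. \<Sum>m. cnj (w i) * (complex_of_real (t ^ m / fact m) * (L ^^ m) X i c))"
    unfolding evol_def
    by (intro sum.cong refl suminf_mult[symmetric] series_summable[OF S _ c B C])
  also have "\<dots> = (\<Sum>m. \<Sum>i\<in>S. cnj (w i) * (complex_of_real (t ^ m / fact m) * (L ^^ m) X i c))"
    by (rule suminf_sum[symmetric]) (intro summable_mult series_summable[OF S _ c B C])
  also have "\<dots> = (\<Sum>m. complex_of_real (t ^ m / fact m) * (\<Sum>i\<in>S. cnj (w i) * (L ^^ m) X i c))"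
    by (simp add: sum_distrib_left mult.left_commute)
  also have "\<dots> = 0" using pw c unfolding lann_def by simp
  finally show "(\<Sum>i\<in>S. cnj (w i) * evol L t X i c) = 0" .
qed




lemma inner_sub:
  assumes "finite T'" "T \<subseteq> T'" "v \<in> vecs T"
  shows "inner_on T' w v = inner_on T w v"
  unfolding inner_on_def
  by (rule sum.mono_neutral_left[symmetric]) (use assms in \<open>auto simp: vecs_def\<close>)

lemma sub_subset: "sub_configs n d N \<subseteq> configs n d"
  using sub_in_configs by blast

lemma local_D:
  assumes strict: "H_wloc n d \<Psi> M N Nk \<subset> H_circ n d \<Psi> Nk"
    and D_local: "supported_on (sub_configs n d Nk) D"
    and D_annih: "\<forall>v \<in> osum (H_wloc n d \<Psi> M N Nk) (H_t n d \<Psi> M N Nk).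
                     mapply (sub_configs n d Nk) D v = (\<lambda>_. 0)"
    and D_maps: "\<forall>v \<in> H_r n d \<Psi> Nk.
                     mapply (sub_configs n d Nk) D v
                       \<in> osum (H_t n d \<Psi> M N Nk) (H_r n d \<Psi> Nk)"
  shows "\<forall>h\<in>H_wloc n d \<Psi> M N Nk. mapply (sub_configs n d Nk) D h = (\<lambda>_. 0)"
    and "\<forall>h\<in>H_wloc n d \<Psi> M N Nk. \<forall>u\<in>vecs (sub_configs n d Nk).
           inner_on (sub_configs n d Nk) h (mapply (sub_configs n d Nk) D u) = 0"
proof -
  let ?T = "sub_configs n d Nk" and ?S = "configs n d"
  let ?Hc = "H_circ n d \<Psi> Nk" and ?Hw = "H_wloc n d \<Psi> M N Nk" and ?Ht = "H_t n d \<Psi> M N Nk"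
    and ?Hr = "H_r n d \<Psi> Nk"
  have T: "finite ?T" by (rule finite_sub)
  have Hc: "subsp ?Hc" "?Hc \<subseteq> vecs ?T"
    unfolding H_circ_def rho_N_def by (rule subsp_supp, rule supp_sub_vecs) (simp add: ptrace_def)
  have Hw: "subsp ?Hw" "?Hw \<subseteq> vecs ?T"
    unfolding H_wloc_def by (rule subsp_supp, rule supp_sub_vecs) (simp add: ptrace_def)
  have HwHc: "?Hw \<subseteq> ?Hc" using strict by blast
  have Dv: "mapply ?T D u \<in> vecs ?T" for u
    using D_local unfolding supported_on_def vecs_def mapply_def by auto
  have zt: "(\<lambda>_. 0) \<in> ?Ht" unfolding H_t_def ominus_def using Hc(1) subsp_def by auto
  have ka: "mapply ?T D h = (\<lambda>_. 0)" if "h \<in> ?Hw" for h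
  proof -
    have "(\<lambda>i. h i + 0) \<in> osum ?Hw ?Ht" unfolding osum_def
      by (rule CollectI, rule exI[of _ h], rule exI[of _ "\<lambda>_. 0"]) (simp add: that zt)
    thus ?thesis using D_annih by simp
  qed
  show "\<forall>h\<in>?Hw. mapply ?T D h = (\<lambda>_. 0)" using ka by blast
  show "\<forall>h\<in>?Hw. \<forall>u\<in>vecs ?T. inner_on ?T h (mapply ?T D u) = 0"
  proof (intro ballI)
    fix h u assume h: "h \<in> ?Hw" and u: "u \<in> vecs ?T"
    obtain a where aHc: "a \<in> ?Hc" and ao: "\<forall>w\<in>?Hc. inner_on ?T w (\<lambda>i. u i - a i) = 0"
      using decomp[OF T Hc] by blast
    obtain b where bHw: "b \<in> ?Hw" and bo: "\<forall>w\<in>?Hw. inner_on ?T w (\<lambda>i. a i - b i) = 0"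
      using decomp[OF T Hw] by blast
    define r where "r = (\<lambda>i. u i - a i)"
    define t where "t = (\<lambda>i. a i - b i)"
    have av: "a \<in> vecs ?T" using aHc Hc(2) by blast
    have bv: "b \<in> vecs ?T" using bHw Hw(2) by blast
    have rv: "r \<in> vecs ?T" unfolding r_def using u av by (rule vecs_diff)
    have tv: "t \<in> vecs ?T" unfolding t_def using av bv by (rule vecs_diff)
    have rHr: "r \<in> ?Hr" unfolding H_r_def ominus_def
      using rv ao inner_sub[OF finite_configs sub_subset rv] r_def by auto
    have tHc: "t \<in> ?Hc" unfolding t_def using subsp_diff[OF Hc(1) aHc] bHw HwHc by blast
    have tHt: "t \<in> ?Ht" unfolding H_t_def ominus_def
      using tHc bo inner_sub[OF finite_configs sub_subset tv] t_def by auto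
    have aeq: "a = (\<lambda>i. b i + t i)" unfolding t_def by simp
    have Da: "mapply ?T D a = (\<lambda>_. 0)"
    proof -
      have "(\<lambda>i. b i + t i) \<in> osum ?Hw ?Ht" unfolding osum_def
        by (rule CollectI, rule exI[of _ b], rule exI[of _ t]) (simp add: bHw tHt)
      thus ?thesis using D_annih aeq by simp
    qed
    have ueq: "u = (\<lambda>i. a i + r i)" unfolding r_def by simp
    have Du: "mapply ?T D u = mapply ?T D r"
      by (subst ueq) (simp add: mapply_add Da)
    obtain t' r' where t'r': "t' \<in> ?Ht" "r' \<in> ?Hr" "mapply ?T D r = (\<lambda>i. t' i + r' i)"
      using D_maps rHr unfolding osum_def by blast
    have "inner_on ?S h t' = 0" using t'r'(1) h unfolding H_t_def ominus_def by blast
    moreover have "inner_on ?S h r' = 0" using t'r'(2) h HwHc unfolding H_r_def ominus_def by blast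
    ultimately have "inner_on ?S h (mapply ?T D u) = 0" using Du t'r'(3) by (simp add: inner_add_right)
    thus "inner_on ?T h (mapply ?T D u) = 0"
      using inner_sub[OF finite_configs sub_subset Dv] by simp
  qed
qed




lemma mapply_delta: "finite T \<Longrightarrow> j \<in> T \<Longrightarrow> mapply T A (delta j) = (\<lambda>i. A i j)"
proof
  fix i assume "finite T" "j \<in> T"
  have "mapply T A (delta j) i = (\<Sum>c\<in>T. if c = j then A i j else 0)"
    unfolding mapply_def delta_def by (intro sum.cong refl) auto
  thus "mapply T A (delta j) i = A i j" using \<open>finite T\<close> \<open>j \<in> T\<close> by simp
qed

lemma delta_vecs: "j \<in> T \<Longrightarrow> delta j \<in> vecs T"
  by (simp add: delta_def vecs_def)

lemma kron_G1:
  assumes c: "c \<in> configs n d"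
    and sl: "slice n d N w (restr (- N) c) \<in> Hl"
    and a: "\<forall>h\<in>Hl. mapply (sub_configs n d N) D h = (\<lambda>_. 0)"
  shows "mapply (configs n d) (kron_id n d N D) w c = 0"
proof -
  have "mapply (configs n d) (kron_id n d N D) w c
      = (\<Sum>x'\<in>sub_configs n d N. D (restr N c) x' * w (merge N x' (restr (- N) c)))"
    by (rule kron_apply[OF c])
  also have "\<dots> = mapply (sub_configs n d N) D (slice n d N w (restr (- N) c)) (restr N c)"
    unfolding mapply_def slice_def by (intro sum.cong refl) auto
  also have "\<dots> = 0" using a sl by simp
  finally show ?thesis .
qed

lemma kron_G2:
  assumes c': "c' \<in> configs n d"
    and sl: "slice n d N w (restr (- N) c') \<in> Hl"
    and b: "\<forall>h\<in>Hl. \<forall>u\<in>vecs (sub_configs n d N).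
           inner_on (sub_configs n d N) h (mapply (sub_configs n d N) D u) = 0"
  shows "(\<Sum>c\<in>configs n d. cnj (w c) * kron_id n d N D c c') = 0"
proof -
  let ?y = "restr (- N) c'" and ?x = "restr N c'"
  have x: "?x \<in> sub_configs n d N" by (rule restr_in_sub[OF c'])
  have "(\<Sum>c\<in>configs n d. cnj (w c) * kron_id n d N D c c')
      = (\<Sum>c\<in>configs n d. if restr (- N) c = ?y then cnj (w c) * D (restr N c) ?x else 0)"
    unfolding kron_id_def using c' by (intro sum.cong refl) auto
  also have "\<dots> = (\<Sum>x\<in>sub_configs n d N. cnj (w (merge N x ?y)) * D x ?x)"
    by (subst sum_fiber[OF restr_in_sub[OF c']]) (simp add: restr_merge1)
  also have "\<dots> = inner_on (sub_configs n d N) (slice n d N w ?y) (mapply (sub_configs n d N) D (delta ?x))"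
    unfolding inner_on_def slice_def mapply_delta[OF finite_sub x] by (intro sum.cong refl) auto
  also have "\<dots> = 0" using b sl delta_vecs[OF x] by blast
  finally show ?thesis .
qed

lemma herm:
  assumes T: "finite T" and p: "psd_on T A" and i: "i \<in> T" and j: "j \<in> T"
  shows "A i j = cnj (A j i)"
proof -
  define B where "B u v = inner_on T u (mapply T A v)" for u v
  have Bd: "B (delta a) (delta b) = A a b" if "a \<in> T" "b \<in> T" for a b
    unfolding B_def using that T by (simp add: mapply_delta inner_delta_left)
  have Bq: "B (\<lambda>c. delta i c + z * delta j c) (\<lambda>c. delta i c + z * delta j c)
      = A i i + z * A i j + cnj z * A j i + cnj z * z * A j j" for z
    unfolding B_def
    by (simp add: mapply_add mapply_scale inner_add_left inner_add_right inner_scale_left inner_scale_right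
        B_def[symmetric] Bd i j algebra_simps)
  have Im0: "Im (B v v) = 0" if "v \<in> vecs T" for v using p that unfolding psd_on_def B_def by blast
  have vv: "(\<lambda>c. delta i c + z * delta j c) \<in> vecs T" for z
    using i j by (intro vecs_add vecs_scale delta_vecs)
  have ii: "Im (A i i) = 0" using Im0[OF delta_vecs[OF i]] Bd[OF i i] by simp
  have jj: "Im (A j j) = 0" using Im0[OF delta_vecs[OF j]] Bd[OF j j] by simp
  have e1: "Im (A i j + A j i) = 0"
    using Im0[OF vv[of 1]] Bq[of 1] ii jj by simp
  have e2: "Re (A i j - A j i) = 0"
    using Im0[OF vv[of \<i>]] Bq[of \<i>] ii jj by (simp add: cnj_mult_self)
  show ?thesis using e1 e2 by (simp add: complex_eq_iff)
qed




lemma cmod_le_sqsum: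
  assumes "finite T" "i \<in> T" "(\<Sum>c\<in>T. (cmod (f c))\<^sup>2) \<le> e\<^sup>2" "e \<ge> 0"
  shows "cmod (f i) \<le> e"
proof -
  have "(cmod (f i))\<^sup>2 \<le> (\<Sum>c\<in>T. (cmod (f c))\<^sup>2)" using assms(1,2) by (intro member_le_sum) auto
  hence "(cmod (f i))\<^sup>2 \<le> e\<^sup>2" using assms(3) by linarith
  thus ?thesis using assms(4) by (simp add: abs_le_square_iff power2_le_iff_abs_le)
qed

lemma inner_bound:
  "cmod (inner_on T w v) \<le> (\<Sum>c\<in>T. (cmod (w c))\<^sup>2) / 2 + (\<Sum>c\<in>T. (cmod (v c))\<^sup>2) / 2"
proof -
  have "cmod (inner_on T w v) \<le> (\<Sum>c\<in>T. cmod (cnj (w c) * v c))" unfolding inner_on_def by (rule norm_sum)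
  also have "\<dots> \<le> (\<Sum>c\<in>T. (cmod (w c))\<^sup>2 / 2 + (cmod (v c))\<^sup>2 / 2)"
  proof (rule sum_mono)
    fix c
    have "0 \<le> (cmod (w c) - cmod (v c))\<^sup>2" by simp
    thus "cmod (cnj (w c) * v c) \<le> (cmod (w c))\<^sup>2 / 2 + (cmod (v c))\<^sup>2 / 2"
      by (simp add: norm_mult power2_diff field_simps)
  qed
  also have "\<dots> = (\<Sum>c\<in>T. (cmod (w c))\<^sup>2) / 2 + (\<Sum>c\<in>T. (cmod (v c))\<^sup>2) / 2"
    by (simp add: sum.distrib sum_divide_distrib)
  finally show ?thesis .
qed

lemma tri4: "cmod (p + q + r + s) \<le> cmod p + cmod q + cmod r + cmod s"
proof -
  have "cmod (p + q + r + s) \<le> cmod (p + q + r) + cmod s" by (rule norm_triangle_ineq)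
  moreover have "cmod (p + q + r) \<le> cmod (p + q) + cmod r" by (rule norm_triangle_ineq)
  moreover have "cmod (p + q) \<le> cmod p + cmod q" by (rule norm_triangle_ineq)
  ultimately show ?thesis by linarith
qed

lemma approx:
  fixes S :: "cfg set" and K0 :: "vect set"
  assumes S: "finite S" and Psi: "\<Psi> \<in> vecs S" "inner_on S \<Psi> \<Psi> = 1" "\<Psi> \<in> K0"
    and K0: "subsp K0" "K0 \<subseteq> vecs S"
    and sig: "psd_on S \<sigma>" "(\<Sum>c\<in>S. \<sigma> c c) = 1" "supp S \<sigma> \<subseteq> K0"
    and rho: "\<forall>w\<in>ominus S K0 (H_d \<Psi>). lann S w \<rho>"
    and mn: "mnorm S (\<lambda>i j. \<rho> i j - \<sigma> i j) < \<epsilon>"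
    and i: "i \<in> S" and j: "j \<in> S"
  shows "cmod (\<rho> i j - \<Psi> i * cnj (\<Psi> j)) \<le> (2 * real (card S) + 2) * \<epsilon>"
proof -
  define E where "E i j = \<rho> i j - \<sigma> i j" for i j
  define X where "X = (\<Sum>a\<in>S. \<Sum>b\<in>S. (cmod (E a b))\<^sup>2)"
  have X0: "X \<ge> 0" unfolding X_def by (intro sum_nonneg) auto
  have sX: "sqrt X < \<epsilon>" using mn unfolding mnorm_def E_def X_def .
  have e0: "\<epsilon> > 0" using sX X0 real_sqrt_ge_zero[OF X0] by linarith
  have tot: "(\<Sum>a\<in>S. \<Sum>b\<in>S. (cmod (E a b))\<^sup>2) < \<epsilon>\<^sup>2"
  proof -
    have "(sqrt X)\<^sup>2 < \<epsilon>\<^sup>2" using sX real_sqrt_ge_zero[OF X0] by (rule power_strict_mono) simp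
    thus ?thesis using X0 unfolding X_def by simp
  qed
  have colE: "(\<Sum>a\<in>S. (cmod (E a b))\<^sup>2) \<le> \<epsilon>\<^sup>2" if b: "b \<in> S" for b
  proof -
    have "(\<Sum>a\<in>S. (cmod (E a b))\<^sup>2) \<le> (\<Sum>a\<in>S. \<Sum>b'\<in>S. (cmod (E a b'))\<^sup>2)"
      using S b by (intro sum_mono member_le_sum) auto
    thus ?thesis using tot by linarith
  qed
  have entE: "cmod (E a b) \<le> \<epsilon>" if "a \<in> S" "b \<in> S" for a b
    using cmod_le_sqsum[OF S that(1) colE[OF that(2)]] e0 by simp
  have Pabs: "cmod (\<Psi> a) \<le> 1" if "a \<in> S" for a
  proof -
    have "complex_of_real (\<Sum>c\<in>S. (cmod (\<Psi> c))\<^sup>2) = 1" using Psi(2) by (simp only: inner_self)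
    hence "(\<Sum>c\<in>S. (cmod (\<Psi> c))\<^sup>2) = 1" by (simp only: of_real_eq_1_iff)
    thus ?thesis using cmod_le_sqsum[OF S that, of \<Psi> 1] by simp
  qed
  define h where "h b = (\<lambda>a. \<sigma> a b)" for b
  define al where "al b = inner_on S \<Psi> (h b)" for b
  define w where "w b = (\<lambda>a. h b a - al b * \<Psi> a)" for b
  have hK: "h b \<in> K0" if "b \<in> S" for b
  proof -
    have "h b = mapply S \<sigma> (delta b)" unfolding h_def using mapply_delta[OF S that] by simp
    thus ?thesis using mapply_in_supp[OF delta_vecs[OF that]] sig(3) by auto
  qed
  have wK: "w b \<in> K0" if "b \<in> S" for b
    unfolding w_def using subsp_diff[OF K0(1) hK[OF that]] K0(1) Psi(3) unfolding subsp_def by blast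
  have Pw: "inner_on S \<Psi> (w b) = 0" for b
    unfolding w_def by (simp add: inner_diff_right inner_scale_right Psi(2) al_def)
  have wP: "inner_on S (w b) \<Psi> = 0" for b using Pw[of b] inner_cnj[of S "w b" \<Psi>] by simp
  have wHw: "w b \<in> ominus S K0 (H_d \<Psi>)" if "b \<in> S" for b
    unfolding ominus_def H_d_def using wK[OF that] by (auto simp: inner_scale_left Pw)
  have wv: "w b \<in> vecs S" if "b \<in> S" for b using wK[OF that] K0(2) by blast
  have sig_eq: "\<sigma> a b = al b * \<Psi> a + w b a" for a b unfolding w_def h_def by simp
  text \<open>the H_w-component of each column is small\<close>
  have wsmall: "cmod (w b a) \<le> \<epsilon>" if "a \<in> S" "b \<in> S" for a b
  proof -
    let ?Eb = "\<lambda>a. E a b"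
    have "lann S (w b) \<rho>" using rho wHw[OF that(2)] by blast
    hence "inner_on S (w b) (\<lambda>a. \<rho> a b) = 0" using that(2) unfolding lann_def inner_on_def by blast
    moreover have "(\<lambda>a. \<rho> a b) = (\<lambda>a. al b * \<Psi> a + (w b a + ?Eb a))"
      unfolding E_def by (rule ext) (simp add: sig_eq algebra_simps)
    ultimately have "al b * inner_on S (w b) \<Psi> + inner_on S (w b) (w b) + inner_on S (w b) ?Eb = 0"
      by (simp add: inner_add_right inner_scale_right add.assoc)
    hence ww: "inner_on S (w b) (w b) = - inner_on S (w b) ?Eb" using wP by (simp add: eq_neg_iff_add_eq_0 add.commute)
    have "(\<Sum>c\<in>S. (cmod (w b c))\<^sup>2) = cmod (inner_on S (w b) (w b))"
      by (simp only: inner_self norm_of_real) (simp add: sum_nonneg)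
    also have "\<dots> = cmod (inner_on S (w b) ?Eb)" using ww by simp
    also have "\<dots> \<le> (\<Sum>c\<in>S. (cmod (w b c))\<^sup>2) / 2 + (\<Sum>c\<in>S. (cmod (E c b))\<^sup>2) / 2" by (rule inner_bound)
    finally have "(\<Sum>c\<in>S. (cmod (w b c))\<^sup>2) \<le> (\<Sum>c\<in>S. (cmod (E c b))\<^sup>2)" by linarith
    also have "\<dots> \<le> \<epsilon>\<^sup>2" by (rule colE[OF that(2)])
    finally show ?thesis using cmod_le_sqsum[OF S that(1)] e0 by simp
  qed
  text \<open>hermiticity gives the coefficients\<close>
  define lam where "lam = cnj (\<Sum>a\<in>S. al a * \<Psi> a)"
  define eta where "eta b = (\<Sum>a\<in>S. cnj (\<Psi> a) * cnj (w a b))" for b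
  have al_eq: "al b = lam * cnj (\<Psi> b) + eta b" if b: "b \<in> S" for b
  proof -
    have H: "al b * \<Psi> a + w b a = cnj (al a) * cnj (\<Psi> b) + cnj (w a b)" if "a \<in> S" for a
      using herm[OF S sig(1) that b] sig_eq[of a b] sig_eq[of b a] by simp
    have "(\<Sum>a\<in>S. cnj (\<Psi> a) * (al b * \<Psi> a + w b a)) = (\<Sum>a\<in>S. cnj (\<Psi> a) * (cnj (al a) * cnj (\<Psi> b) + cnj (w a b)))"
      using H by (intro sum.cong refl) simp
    moreover have "(\<Sum>a\<in>S. cnj (\<Psi> a) * (al b * \<Psi> a + w b a)) = al b * inner_on S \<Psi> \<Psi> + inner_on S \<Psi> (w b)"
      unfolding inner_on_def by (simp add: distrib_left sum.distrib sum_distrib_left mult.left_commute)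
    moreover have "(\<Sum>a\<in>S. cnj (\<Psi> a) * (cnj (al a) * cnj (\<Psi> b) + cnj (w a b))) = lam * cnj (\<Psi> b) + eta b"
    proof -
      have "(\<Sum>a\<in>S. cnj (\<Psi> a) * (cnj (al a) * cnj (\<Psi> b) + cnj (w a b)))
          = (\<Sum>a\<in>S. cnj (\<Psi> b) * (cnj (al a) * cnj (\<Psi> a))) + eta b"
        unfolding eta_def distrib_left sum.distrib
        by (rule arg_cong[where f="\<lambda>u. u + _"], rule sum.cong[OF refl]) (simp only: mult.commute mult.left_commute)
      also have "\<dots> = cnj (\<Psi> b) * (\<Sum>a\<in>S. cnj (al a) * cnj (\<Psi> a)) + eta b"
        by (simp only: sum_distrib_left)
      also have "(\<Sum>a\<in>S. cnj (al a) * cnj (\<Psi> a)) = lam" unfolding lam_def by simp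
      finally show ?thesis by (simp only: mult.commute)
    qed
    ultimately show ?thesis using Psi(2) Pw by simp
  qed
  have eta_b: "cmod (eta b) \<le> real (card S) * \<epsilon>" if b: "b \<in> S" for b
  proof -
    have "cmod (eta b) \<le> (\<Sum>a\<in>S. cmod (cnj (\<Psi> a) * cnj (w a b)))" unfolding eta_def by (rule norm_sum)
    also have "\<dots> \<le> (\<Sum>a\<in>S. \<epsilon>)"
    proof (rule sum_mono)
      fix a assume a: "a \<in> S"
      have "cmod (cnj (\<Psi> a) * cnj (w a b)) = cmod (\<Psi> a) * cmod (w a b)" by (simp add: norm_mult)
      also have "\<dots> \<le> 1 * \<epsilon>" using Pabs[OF a] wsmall[OF b a] by (intro mult_mono) auto
      finally show "cmod (cnj (\<Psi> a) * cnj (w a b)) \<le> \<epsilon>" by simp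
    qed
    finally show ?thesis by simp
  qed
  have lam_b: "cmod (lam - 1) \<le> real (card S) * \<epsilon>"
  proof -
    have "1 = (\<Sum>c\<in>S. \<sigma> c c)" using sig(2) by simp
    also have "\<dots> = (\<Sum>c\<in>S. al c * \<Psi> c) + (\<Sum>c\<in>S. w c c)" by (simp add: sig_eq sum.distrib)
    finally have "(\<Sum>c\<in>S. al c * \<Psi> c) - 1 = - (\<Sum>c\<in>S. w c c)" by (simp add: algebra_simps)
    moreover have "lam - 1 = cnj ((\<Sum>c\<in>S. al c * \<Psi> c) - 1)" unfolding lam_def by simp
    ultimately have "cmod (lam - 1) = cmod (- (\<Sum>c\<in>S. w c c))" by (simp only: complex_mod_cnj)
    hence "cmod (lam - 1) = cmod (\<Sum>c\<in>S. w c c)" by (simp only: norm_minus_cancel)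
    also have "\<dots> \<le> (\<Sum>c\<in>S. cmod (w c c))" by (rule norm_sum)
    also have "\<dots> \<le> (\<Sum>c\<in>S. \<epsilon>)" using wsmall by (intro sum_mono) auto
    finally show ?thesis by simp
  qed
  define p1 where "p1 = (lam - 1) * cnj (\<Psi> j) * \<Psi> i"
  define p2 where "p2 = eta j * \<Psi> i"
  have eq: "\<rho> i j - \<Psi> i * cnj (\<Psi> j) = p1 + p2 + w j i + E i j"
    unfolding E_def p1_def p2_def using al_eq[OF j] sig_eq[of i j] by (simp add: algebra_simps)
  have b1: "cmod p1 \<le> real (card S) * \<epsilon>"
  proof -
    have "cmod p1 = cmod (lam - 1) * (cmod (\<Psi> j) * cmod (\<Psi> i))"
      unfolding p1_def by (simp add: norm_mult)
    also have "\<dots> \<le> cmod (lam - 1) * 1"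
      using Pabs[OF i] Pabs[OF j] by (intro mult_left_mono mult_le_one) auto
    finally show ?thesis using lam_b by simp
  qed
  have b2: "cmod p2 \<le> real (card S) * \<epsilon>"
  proof -
    have "cmod p2 = cmod (eta j) * cmod (\<Psi> i)" unfolding p2_def by (simp add: norm_mult)
    also have "\<dots> \<le> cmod (eta j) * 1" using Pabs[OF i] by (intro mult_left_mono) auto
    finally show ?thesis using eta_b[OF j] by simp
  qed
  have "cmod (p1 + p2 + w j i + E i j) \<le> cmod p1 + cmod p2 + cmod (w j i) + cmod (E i j)"
    by (rule tri4)
  hence "cmod (\<rho> i j - \<Psi> i * cnj (\<Psi> j)) \<le> cmod p1 + cmod p2 + cmod (w j i) + cmod (E i j)"
    using eq by simp
  thus ?thesis using b1 b2 wsmall[OF i j] entE[OF i j] by (simp add: algebra_simps)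
qed




lemma subsp_inter:
  assumes "\<And>k. k < M \<Longrightarrow> subsp (Q k)"
  shows "subsp {v \<in> vecs S. \<forall>k<M. v \<in> Q k}"
  using assms subsp_vecs unfolding subsp_def by auto

lemma subsp_ominus:
  assumes "subsp K" shows "subsp (ominus S K X)"
  using assms unfolding subsp_def ominus_def by (auto simp: inner_add_right inner_scale_right)

theorem corollary6:
  fixes n :: nat and d :: "nat \<Rightarrow> nat" and \<Psi> :: vect
    and M :: nat and N :: "nat \<Rightarrow> nat set" and Dloc :: "nat \<Rightarrow> cmat"
  assumes Psi_vec: "\<Psi> \<in> vecs (configs n d)"
    and Psi_unit: "inner_on (configs n d) \<Psi> \<Psi> = 1"
    and N_sites: "\<forall>k<M. N k \<subseteq> {..<n}"
    and strict: "\<forall>k<M. H_wloc n d \<Psi> M N (N k) \<subset> H_circ n d \<Psi> (N k)"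
    and D_local: "\<forall>k<M. supported_on (sub_configs n d (N k)) (Dloc k)"
    and D_annih: "\<forall>k<M. \<forall>v \<in> osum (H_wloc n d \<Psi> M N (N k)) (H_t n d \<Psi> M N (N k)).
                     mapply (sub_configs n d (N k)) (Dloc k) v = (\<lambda>_. 0)"
    and D_maps: "\<forall>k<M. \<forall>v \<in> H_r n d \<Psi> (N k).
                     mapply (sub_configs n d (N k)) (Dloc k) v
                       \<in> osum (H_t n d \<Psi> M N (N k)) (H_r n d \<Psi> (N k))"
    and gas: "GAS n d (lindblad0 (configs n d) M (\<lambda>k. kron_id n d (N k) (Dloc k)))
                (dens n d (H_0 n d \<Psi> M N))"
  shows "\<forall>\<rho>0 \<in> dens n d (ominus (configs n d) (vecs (configs n d))
                   {v. \<forall>k<M. v \<in> tensor_full n d (N k) (H_wloc n d \<Psi> M N (N k))}).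
           \<forall>i\<in>configs n d. \<forall>j\<in>configs n d.
             ((\<lambda>t. evol (lindblad0 (configs n d) M (\<lambda>k. kron_id n d (N k) (Dloc k))) t \<rho>0 i j)
                \<longlongrightarrow> rho_d \<Psi> i j) at_top"
proof (intro ballI)
  let ?S = "configs n d"
  let ?K = "\<lambda>k. kron_id n d (N k) (Dloc k)"
  let ?L = "lindblad0 ?S M ?K"
  let ?Hw = "H_w n d \<Psi> M N"
  let ?H0 = "H_0 n d \<Psi> M N"
  let ?W = "{v. \<forall>k<M. v \<in> tensor_full n d (N k) (H_wloc n d \<Psi> M N (N k))}"
  fix \<rho>0 i j
  assume rho0: "\<rho>0 \<in> dens n d (ominus ?S (vecs ?S) ?W)" and i: "i \<in> ?S" and j: "j \<in> ?S"
  have S: "finite ?S" by (rule finite_configs)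
  have H0: "subsp ?H0" "?H0 \<subseteq> vecs ?S"
    unfolding H_0_def by (rule subsp_inter, rule subsp_supp) auto
  have PsiH0: "\<Psi> \<in> ?H0"
    unfolding H_0_def rho_N_def using Psi_vec Psi_in_supp[OF Psi_vec] by blast
  have Hw: "subsp ?Hw" "?Hw \<subseteq> vecs ?S"
    unfolding H_w_def using subsp_ominus[OF H0(1)] H0(2) by (auto simp: ominus_def)
  have Pi: "isproj ?S ?Hw (proj ?S ?Hw)" by (rule proj_isproj[OF S Hw])
  have slice_k: "slice n d (N k) w y \<in> H_wloc n d \<Psi> M N (N k)"
    if "w \<in> ?Hw" "y \<in> sub_configs n d (- N k)" for k w y
    unfolding H_wloc_def by (rule slice_in_supp[OF Hw Pi that])
  have loc: "(\<forall>h\<in>H_wloc n d \<Psi> M N (N k). mapply (sub_configs n d (N k)) (Dloc k) h = (\<lambda>_. 0)) \<and>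
    (\<forall>h\<in>H_wloc n d \<Psi> M N (N k). \<forall>u\<in>vecs (sub_configs n d (N k)).
           inner_on (sub_configs n d (N k)) h (mapply (sub_configs n d (N k)) (Dloc k) u) = 0)"
    if k: "k < M" for k
  proof -
    have s: "H_wloc n d \<Psi> M N (N k) \<subset> H_circ n d \<Psi> (N k)" using strict k by blast
    have l: "supported_on (sub_configs n d (N k)) (Dloc k)" using D_local k by blast
    have a: "\<forall>v \<in> osum (H_wloc n d \<Psi> M N (N k)) (H_t n d \<Psi> M N (N k)).
                     mapply (sub_configs n d (N k)) (Dloc k) v = (\<lambda>_. 0)" using D_annih k by blast
    have m: "\<forall>v \<in> H_r n d \<Psi> (N k).
                     mapply (sub_configs n d (N k)) (Dloc k) v
                       \<in> osum (H_t n d \<Psi> M N (N k)) (H_r n d \<Psi> (N k))" using D_maps k by blast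
    show ?thesis using local_D[OF s l a m] by blast
  qed
  have G1: "\<forall>c\<in>?S. mapply ?S (?K k) w c = 0" if k: "k < M" and w: "w \<in> ?Hw" for k w
  proof
    fix c assume c: "c \<in> ?S"
    show "mapply ?S (?K k) w c = 0"
      by (rule kron_G1[OF c slice_k[OF w restr_in_sub[OF c]]]) (use loc[OF k] in blast)
  qed
  have G2: "lann ?S w (?K k)" if k: "k < M" and w: "w \<in> ?Hw" for k w
    unfolding lann_def
  proof
    fix c assume c: "c \<in> ?S"
    show "(\<Sum>i\<in>?S. cnj (w i) * ?K k i c) = 0"
      by (rule kron_G2[OF c slice_k[OF w restr_in_sub[OF c]]]) (use loc[OF k] in blast)
  qed
  have inv: "lann ?S w (?L X)" if w: "w \<in> ?Hw" and X: "lann ?S w X" for w X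
    unfolding lann_def using lind_lann[of M ?S ?K w X] G1[OF _ w] G2[OF _ w] X by blast
  define C where "C = (\<Sum>k<M. 2 * (nrm ?S (?K k))\<^sup>2)"
  have C0: "C \<ge> 0" unfolding C_def by (intro sum_nonneg) simp
  have B: "nrm ?S (?L X) \<le> C * nrm ?S X" for X unfolding C_def by (rule lindblad_bound[OF S])
  have rho0_props: "supported_on ?S \<rho>0" "psd_on ?S \<rho>0" "(\<Sum>c\<in>?S. \<rho>0 c c) = 1"
    "supp ?S \<rho>0 \<subseteq> ominus ?S (vecs ?S) ?W"
    using rho0 unfolding dens_def by auto
  have lann0: "lann ?S w \<rho>0" if w: "w \<in> ?Hw" for w
    unfolding lann_def
  proof
    fix c assume c: "c \<in> ?S"
    have wW: "w \<in> ?W"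
    proof (intro CollectI allI impI)
      fix k assume k: "k < M"
      show "w \<in> tensor_full n d (N k) (H_wloc n d \<Psi> M N (N k))"
        by (rule in_tensor_full) (use w Hw(2) slice_k in blast)+
    qed
    have "mapply ?S \<rho>0 (delta c) \<in> ominus ?S (vecs ?S) ?W"
      using rho0_props(4) mapply_in_supp[OF delta_vecs[OF c]] by blast
    hence "inner_on ?S w (mapply ?S \<rho>0 (delta c)) = 0" using wW unfolding ominus_def by blast
    thus "(\<Sum>i\<in>?S. cnj (w i) * \<rho>0 i c) = 0"
      unfolding mapply_delta[OF S c] inner_on_def .
  qed
  have lann_t: "lann ?S w (evol ?L t \<rho>0)" if w: "w \<in> ?Hw" for w t
    by (rule evol_lann[OF S B C0 inv[OF w] lann0[OF w]])
  have rd_apply: "mapply ?S (rho_d \<Psi>) v = (\<lambda>a. inner_on ?S \<Psi> v * \<Psi> a)" for v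
    unfolding mapply_def rho_d_def inner_on_def by (simp add: sum_distrib_left mult.assoc mult.commute mult.left_commute)
  have rd: "rho_d \<Psi> \<in> dens n d ?H0"
    unfolding dens_def
  proof (intro CollectI conjI)
    show "supported_on ?S (rho_d \<Psi>)" using Psi_vec unfolding supported_on_def rho_d_def vecs_def by auto
    show "psd_on ?S (rho_d \<Psi>)" unfolding psd_on_def
    proof
      fix v assume "v \<in> vecs ?S"
      have "inner_on ?S v (mapply ?S (rho_d \<Psi>) v) = cnj (inner_on ?S \<Psi> v) * inner_on ?S \<Psi> v"
        unfolding rd_apply inner_scale_right using inner_cnj[of ?S v \<Psi>] by (simp add: mult.commute)
      also have "\<dots> = complex_of_real ((cmod (inner_on ?S \<Psi> v))\<^sup>2)" by (rule cnj_mult_self)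
      finally show "Im (inner_on ?S v (mapply ?S (rho_d \<Psi>) v)) = 0 \<and> Re (inner_on ?S v (mapply ?S (rho_d \<Psi>) v)) \<ge> 0"
        by simp
    qed
    show "(\<Sum>c\<in>?S. rho_d \<Psi> c c) = 1" using Psi_unit unfolding rho_d_def inner_on_def by (simp add: mult.commute)
    show "supp ?S (rho_d \<Psi>) \<subseteq> ?H0"
    proof
      fix x assume "x \<in> supp ?S (rho_d \<Psi>)"
      then obtain v where "x = mapply ?S (rho_d \<Psi>) v" unfolding supp_def by blast
      hence "x = (\<lambda>a. inner_on ?S \<Psi> v * \<Psi> a)" by (simp add: rd_apply)
      thus "x \<in> ?H0" using H0(1) PsiH0 unfolding subsp_def by blast
    qed
  qed
  have rho0_dens: "\<rho>0 \<in> dens n d (vecs ?S)"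
    using rho0 unfolding dens_def ominus_def by auto
  have lim: "((\<lambda>t. INF \<sigma>\<in>dens n d ?H0. mnorm ?S (\<lambda>i j. evol ?L t \<rho>0 i j - \<sigma> i j)) \<longlongrightarrow> 0) at_top"
    using gas rho0_dens unfolding GAS_def by blast
  show "((\<lambda>t. evol ?L t \<rho>0 i j) \<longlongrightarrow> rho_d \<Psi> i j) at_top"
    unfolding tendsto_iff
  proof (intro allI impI)
    fix e :: real assume e: "e > 0"
    define \<epsilon> where "\<epsilon> = e / (2 * real (card ?S) + 3)"
    have ep: "\<epsilon> > 0" unfolding \<epsilon>_def using e by simp
    have ev: "\<forall>\<^sub>F t in at_top. (INF \<sigma>\<in>dens n d ?H0. mnorm ?S (\<lambda>i j. evol ?L t \<rho>0 i j - \<sigma> i j)) < \<epsilon>"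
      using order_tendstoD(2)[OF lim ep] .
    show "\<forall>\<^sub>F t in at_top. dist (evol ?L t \<rho>0 i j) (rho_d \<Psi> i j) < e"
    proof (rule eventually_mono[OF ev])
      fix t assume t: "(INF \<sigma>\<in>dens n d ?H0. mnorm ?S (\<lambda>i j. evol ?L t \<rho>0 i j - \<sigma> i j)) < \<epsilon>"
      have ne: "(\<lambda>\<sigma>. mnorm ?S (\<lambda>i j. evol ?L t \<rho>0 i j - \<sigma> i j)) ` dens n d ?H0 \<noteq> {}" using rd by blast
      obtain \<sigma> where sig: "\<sigma> \<in> dens n d ?H0" and mn: "mnorm ?S (\<lambda>i j. evol ?L t \<rho>0 i j - \<sigma> i j) < \<epsilon>"
        using cInf_lessD[OF ne t] by blast
      have sp: "psd_on ?S \<sigma>" "(\<Sum>c\<in>?S. \<sigma> c c) = 1" "supp ?S \<sigma> \<subseteq> ?H0" using sig unfolding dens_def by auto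
      have "cmod (evol ?L t \<rho>0 i j - \<Psi> i * cnj (\<Psi> j)) \<le> (2 * real (card ?S) + 2) * \<epsilon>"
        by (rule approx[OF S Psi_vec Psi_unit PsiH0 H0 sp _ mn i j])
           (use lann_t in \<open>simp add: H_w_def\<close>)
      also have "\<dots> < e" unfolding \<epsilon>_def using e by (simp add: field_simps)
      finally show "dist (evol ?L t \<rho>0 i j) (rho_d \<Psi> i j) < e" by (simp add: dist_norm rho_d_def)
    qed
  qed
qed


end
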